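(* Let $\mathfrak{g}$, $R$, $J$, $B\otimes B=R/J$ and, for a homogeneous invariant $F\in (S\mathfrak{g})^{\mathfrak{g}}$ of degree $\ge 2$, the element $\widehat F\in R/J$ be as in the context. Let $F,H\in (S\mathfrak{g})^{\mathfrak{g}}$ be homogeneous invariants of positive degrees. Then $\widehat{FH}=0$ in $R/J$.
   Context: Let $\mathfrak{g}$ be a simple finite-dimensional complex Lie algebra with a fixed nondegenerate invariant symmetric bilinear form, used to identify $\mathfrak{g}$ with $\mathfrak{g}^*$ (so $S\mathfrak{g}$ is identified with polynomial functions on $\mathfrak{g}$). Let $n=\dim\mathfrak{g}$ and let $e_1,\dots,e_n$ be a basis of $\mathfrak{g}$ orthonormal for the form, with corresponding coordinates $z_1,\dots,z_n$ on $\mathfrak{g}$. Let $R$ be the exterior (Grassmann) algebra over $\mathbb{C}$ on odd generators $x_1,\dots,x_n,y_1,\dots,y_n$ (so $R\cong\wedge(\mathfrak{g}\oplus\mathfrak{g})$, the algebra of functions on $\Pi\mathfrak{g}\times\Pi\mathfrak{g}$), bigraded with $x_a$ of degree $(1,0)$ and $y_a$ of degree $(0,1)$, and with $\mathfrak{g}$ acting by derivations so that $(x_a)$ and $(y_a)$ transform as coordinates of two copies of $\mathfrak{g}$. Put $X=\sum_a x_a e_a$, $Y=\sum_a y_a e_a\in R\otimes\mathfrak{g}$, and for $U=\sum_a u_ae_a$, $V=\sum_a v_ae_a$ with $u_a,v_a$ odd elements of $R$ set $\{U,V\}=\sum_{a,b}u_av_b[e_a,e_b]\in R\otimes\mathfrak{g}$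 (this equals $UV+VU$ computed in $R\otimes U(\mathfrak{g})$). Let $J\subset R$ be the ideal generated by the coefficients (of $e_1,\dots,e_n$) of $\{X,X\}$ and of $\{Y,Y\}$; then $R/J\cong B\otimes B$, where $B$ is the quotient of $\wedge\mathfrak{g}$ by the ideal generated by the coefficients of $\{X,X\}$. For a homogeneous $F\in(S\mathfrak{g})^{\mathfrak{g}}$ of degree $k\ge 2$, viewed as a polynomial $F(z_1,\dots,z_n)$, define $$\widehat F=\sum_{a,b=1}^n \frac{\partial^2F}{\partial z_a\partial z_b}(\{X,Y\})\,x_a y_b\in R/J,$$ where $\frac{\partial^2F}{\partial z_a\partial z_b}(\{X,Y\})$ means substituting for $z_c$ the (even) coefficient of $e_c$ in $\{X,Y\}$. (Equivalently: view $F$ as an element of $S^{k-2}\mathfrak{g}\otimes S^2\mathfrak{g}$, apply the first factor to $\{X,Y\}$ and the second to $X\otimes Y$.) The element $\widehat F$ is $\mathfrak{g}$-invariant of bidegree $(k-1,k-1)$. *)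

theory Defs
  imports Complex_Main "HOL-Library.Poly_Mapping"
begin

text \<open>g has basis e_0,...,e_(n-1), orthonormal for the fixed invariant form,
  and [e_a, e_b] = sum_k c a b k e_k.\<close>

definition lie_vecs :: "nat \<Rightarrow> (nat \<Rightarrow> complex) set" where
  "lie_vecs n = {v. \<forall>i. n \<le> i \<longrightarrow> v i = 0}"

definition lie_ad :: "nat \<Rightarrow> (nat \<Rightarrow> nat \<Rightarrow> nat \<Rightarrow> complex) \<Rightarrow> nat \<Rightarrow> (nat \<Rightarrow> complex) \<Rightarrow> (nat \<Rightarrow> complex)" where
  "lie_ad n c a v = (\<lambda>k. if k < n then (\<Sum>b<n. v b * c a b k) else 0)"

definition lie_ideal :: "nat \<Rightarrow> (nat \<Rightarrow> nat \<Rightarrow> nat \<Rightarrow> complex) \<Rightarrow> (nat \<Rightarrow> complex) set \<Rightarrow> bool" where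
  "lie_ideal n c V \<longleftrightarrow> V \<subseteq> lie_vecs n \<and> (\<lambda>_. 0) \<in> V
     \<and> (\<forall>v\<in>V. \<forall>w\<in>V. (\<lambda>i. v i + w i) \<in> V)
     \<and> (\<forall>v\<in>V. \<forall>t. (\<lambda>i. t * v i) \<in> V)
     \<and> (\<forall>v\<in>V. \<forall>a<n. lie_ad n c a v \<in> V)"

text \<open>Simple complex Lie algebra with an invariant nondegenerate symmetric form
  for which the basis is orthonormal (invariance: ([e_a,e_b],e_k) = -(e_b,[e_a,e_k])).\<close>
definition simple_quadratic_lie :: "nat \<Rightarrow> (nat \<Rightarrow> nat \<Rightarrow> nat \<Rightarrow> complex) \<Rightarrow> bool" where
  "simple_quadratic_lie n c \<longleftrightarrow>
     (\<forall>a<n. \<forall>b<n. \<forall>k<n. c a b k = - c b a k)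
   \<and> (\<forall>a<n. \<forall>b<n. \<forall>d<n. \<forall>m<n.
        (\<Sum>k<n. c a b k * c k d m + c b d k * c k a m + c d a k * c k b m) = 0)
   \<and> (\<forall>a<n. \<forall>b<n. \<forall>k<n. c a b k = - c a k b)
   \<and> (\<exists>a<n. \<exists>b<n. \<exists>k<n. c a b k \<noteq> 0)
   \<and> (\<forall>V. lie_ideal n c V \<longrightarrow> V = {\<lambda>_. 0} \<or> V = lie_vecs n)"

section \<open>Polynomials on g (elements of S g) in the coordinates z_0..z_(n-1)\<close>

type_synonym cpoly = "(nat \<Rightarrow>\<^sub>0 nat) \<Rightarrow>\<^sub>0 complex"

definition pvar :: "nat \<Rightarrow> cpoly" where
  "pvar i = Poly_Mapping.single (Poly_Mapping.single i 1) 1"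

definition pconst :: "complex \<Rightarrow> cpoly" where
  "pconst t = Poly_Mapping.single 0 t"

definition pdiff :: "nat \<Rightarrow> cpoly \<Rightarrow> cpoly" where
  "pdiff i P = (\<Sum>\<alpha>\<in>Poly_Mapping.keys P. Poly_Mapping.single (\<alpha> - Poly_Mapping.single i (1::nat))
                                (of_nat (Poly_Mapping.lookup \<alpha> i) * Poly_Mapping.lookup P \<alpha> :: complex))"

definition poly_in_vars :: "nat \<Rightarrow> cpoly \<Rightarrow> bool" where
  "poly_in_vars n P \<longleftrightarrow> (\<forall>\<alpha>\<in>Poly_Mapping.keys P. Poly_Mapping.keys \<alpha> \<subseteq> {..<n})"

definition homogeneous :: "nat \<Rightarrow> cpoly \<Rightarrow> bool" where
  "homogeneous d P \<longleftrightarrow> (\<forall>\<alpha>\<in>Poly_Mapping.keys P. (\<Sum>i\<in>Poly_Mapping.keys \<alpha>. Poly_Mapping.lookup \<alpha> i) = d)"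

text \<open>g-invariance: e_a . P = 0 for every basis vector, i.e.
  sum_{b,k} c a k b z_k dP/dz_b = 0 (infinitesimal coadjoint invariance).\<close>
definition invariant_poly :: "nat \<Rightarrow> (nat \<Rightarrow> nat \<Rightarrow> nat \<Rightarrow> complex) \<Rightarrow> cpoly \<Rightarrow> bool" where
  "invariant_poly n c P \<longleftrightarrow> poly_in_vars n P \<and>
     (\<forall>a<n. (\<Sum>b<n. \<Sum>k<n. pconst (c a k b) * pvar k * pdiff b P) = 0)"

section \<open>The Grassmann algebra R on generators x_a = gen a, y_a = gen (n+a), a < n\<close>

text \<open>Elements are coefficient functions on subsets of generators (monomials
  in increasing order of generators).\<close>
type_synonym grass = "nat set \<Rightarrow> complex"

definition gsign :: "nat set \<Rightarrow> nat set \<Rightarrow> complex" where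
  "gsign A B = (-1) ^ card {(a, b). a \<in> A \<and> b \<in> B \<and> b < a}"

definition gmul :: "grass \<Rightarrow> grass \<Rightarrow> grass" where
  "gmul u v = (\<lambda>S. \<Sum>A\<in>Pow S. gsign A (S - A) * u A * v (S - A))"

definition gadd :: "grass \<Rightarrow> grass \<Rightarrow> grass" where
  "gadd u v = (\<lambda>S. u S + v S)"

definition gscale :: "complex \<Rightarrow> grass \<Rightarrow> grass" where
  "gscale t u = (\<lambda>S. t * u S)"

definition gzero :: grass where "gzero = (\<lambda>S. 0)"

definition gone :: grass where "gone = (\<lambda>S. if S = {} then 1 else 0)"

definition gsum :: "('i \<Rightarrow> grass) \<Rightarrow> 'i set \<Rightarrow> grass" where
  "gsum f I = (\<lambda>S. \<Sum>i\<in>I. f i S)"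

definition gen :: "nat \<Rightarrow> grass" where
  "gen i = (\<lambda>S. if S = {i} then 1 else 0)"

definition gpow :: "grass \<Rightarrow> nat \<Rightarrow> grass" where
  "gpow u k = (gmul u ^^ k) gone"

definition Rgr :: "nat \<Rightarrow> grass set" where
  "Rgr n = {u. \<forall>S. u S \<noteq> 0 \<longrightarrow> S \<subseteq> {..<2*n}}"

inductive_set gideal :: "nat \<Rightarrow> grass set \<Rightarrow> grass set" for n G where
  gen_in: "g \<in> G \<Longrightarrow> g \<in> gideal n G"
| zero_in: "gzero \<in> gideal n G"
| add_in: "u \<in> gideal n G \<Longrightarrow> v \<in> gideal n G \<Longrightarrow> gadd u v \<in> gideal n G"
| lmul_in: "r \<in> Rgr n \<Longrightarrow> u \<in> gideal n G \<Longrightarrow> gmul r u \<in> gideal n G"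
| rmul_in: "r \<in> Rgr n \<Longrightarrow> u \<in> gideal n G \<Longrightarrow> gmul u r \<in> gideal n G"

text \<open>coefficient of e_k in {U,V} for U = sum u_a e_a, V = sum v_b e_b\<close>
definition gbracket :: "nat \<Rightarrow> (nat \<Rightarrow> nat \<Rightarrow> nat \<Rightarrow> complex) \<Rightarrow> (nat \<Rightarrow> grass) \<Rightarrow> (nat \<Rightarrow> grass) \<Rightarrow> nat \<Rightarrow> grass" where
  "gbracket n c u v k = gsum (\<lambda>(a, b). gscale (c a b k) (gmul (u a) (v b))) ({..<n} \<times> {..<n})"

definition xgen :: "nat \<Rightarrow> nat \<Rightarrow> grass" where "xgen n a = gen a"
definition ygen :: "nat \<Rightarrow> nat \<Rightarrow> grass" where "ygen n a = gen (n + a)"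

text \<open>J: ideal generated by the coefficients of {X,X} and {Y,Y}\<close>
definition Jideal :: "nat \<Rightarrow> (nat \<Rightarrow> nat \<Rightarrow> nat \<Rightarrow> complex) \<Rightarrow> grass set" where
  "Jideal n c = gideal n ((\<lambda>k. gbracket n c (xgen n) (xgen n) k) ` {..<n}
                          \<union> (\<lambda>k. gbracket n c (ygen n) (ygen n) k) ` {..<n})"

text \<open>substitute (commuting, even) Grassmann elements w_0..w_(n-1) for z_0..z_(n-1)\<close>
definition geval :: "nat \<Rightarrow> cpoly \<Rightarrow> (nat \<Rightarrow> grass) \<Rightarrow> grass" where
  "geval n P w = gsum (\<lambda>\<alpha>. gscale (Poly_Mapping.lookup P \<alpha>)
      (fold (\<lambda>i acc. gmul acc (gpow (w i) (Poly_Mapping.lookup \<alpha> i))) [0..<n] gone)) (Poly_Mapping.keys P)"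

definition Fhat :: "nat \<Rightarrow> (nat \<Rightarrow> nat \<Rightarrow> nat \<Rightarrow> complex) \<Rightarrow> cpoly \<Rightarrow> grass" where
  "Fhat n c F = gsum (\<lambda>(a, b). gmul (gmul (geval n (pdiff a (pdiff b F)) (gbracket n c (xgen n) (ygen n)))
                                           (xgen n a)) (ygen n b))
                      ({..<n} \<times> {..<n})"

end

theory Submission
  imports Defs
begin


typedef gr = "{u::grass. \<forall>S. infinite S \<longrightarrow> u S = 0}"
  morphisms rg ag by (rule exI[of _ "\<lambda>_. 0"]) auto

setup_lifting type_definition_gr

definition invs :: "nat set \<Rightarrow> nat set \<Rightarrow> (nat \<times> nat) set" where
  "invs A B = {(a, b). a \<in> A \<and> b \<in> B \<and> b < a}"

lemma gsign_invs: "gsign A B = (-1) ^ card (invs A B)"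
  by (simp add: gsign_def invs_def)

lemma invs_Un_left:
  assumes "finite B" "finite C" "finite D" "B \<inter> C = {}"
  shows "card (invs (B \<union> C) D) = card (invs B D) + card (invs C D)"
proof -
  have "invs (B \<union> C) D = invs B D \<union> invs C D" by (auto simp: invs_def)
  moreover have "finite (invs B D)" "finite (invs C D)"
    using assms by (auto intro: finite_subset[of _ "B \<times> D"] finite_subset[of _ "C \<times> D"] simp: invs_def)
  moreover have "invs B D \<inter> invs C D = {}" using assms(4) by (auto simp: invs_def)
  ultimately show ?thesis by (simp add: card_Un_disjoint)
qed

lemma invs_Un_right:
  assumes "finite B" "finite C" "finite D" "C \<inter> D = {}"
  shows "card (invs B (C \<union> D)) = card (invs B C) + card (invs B D)"
proof -
  have "invs B (C \<union> D) = invs B C \<union> invs B D" by (auto simp: invs_def)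
  moreover have "finite (invs B C)" "finite (invs B D)"
    using assms by (auto intro: finite_subset[of _ "B \<times> C"] finite_subset[of _ "B \<times> D"] simp: invs_def)
  moreover have "invs B C \<inter> invs B D = {}" using assms(4) by (auto simp: invs_def)
  ultimately show ?thesis by (simp add: card_Un_disjoint)
qed

lemma gsign_cocycle:
  assumes "finite B" "finite C" "finite D" "B \<inter> C = {}" "B \<inter> D = {}" "C \<inter> D = {}"
  shows "gsign (B \<union> C) D * gsign B C = gsign B (C \<union> D) * gsign C D"
  using assms by (simp add: gsign_invs invs_Un_left invs_Un_right power_add[symmetric] add_ac)

lemma gmul_infinite: "infinite S \<Longrightarrow> gmul u v S = 0"
  by (simp add: gmul_def)

lemma gmul_assoc:
  "gmul (gmul u v) w = gmul u (gmul v w)"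
proof
  fix S
  show "gmul (gmul u v) w S = gmul u (gmul v w) S"
  proof (cases "finite S")
    case False thus ?thesis by (simp add: gmul_infinite)
  next
    case fin: True
    have "gmul (gmul u v) w S = (\<Sum>A\<in>Pow S. \<Sum>B\<in>Pow A.
            gsign A (S - A) * (gsign B (A - B) * u B * v (A - B)) * w (S - A))"
      by (simp add: gmul_def sum_distrib_left sum_distrib_right)
    also have "\<dots> = (\<Sum>(A,B)\<in>Sigma (Pow S) Pow.
            gsign A (S - A) * (gsign B (A - B) * u B * v (A - B)) * w (S - A))"
      by (rule sum.Sigma) (use fin in \<open>auto intro: finite_subset\<close>)
    also have "\<dots> = (\<Sum>(B,C)\<in>Sigma (Pow S) (\<lambda>B. Pow (S - B)).
            gsign B (S - B) * (u B * (gsign C (S - B - C) * v C * w (S - B - C))))"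
    proof (rule sum.reindex_bij_witness[where i="\<lambda>(B,C). (B \<union> C, B)" and j="\<lambda>(A,B). (B, A - B)"])
      fix a assume a: "a \<in> Sigma (Pow S) Pow"
      obtain A B where [simp]: "a = (A, B)" by (cases a)
      from a have AS: "A \<subseteq> S" and BA: "B \<subseteq> A" by auto
      define C where "C = A - B"
      have AU: "A = B \<union> C" using BA by (auto simp: C_def)
      have CS: "C \<subseteq> S - B" using AS by (auto simp: C_def)
      have fB: "finite B" "finite C" "finite (S - B - C)"
        using AS BA CS fin by (auto intro: finite_subset)
      have e1: "S - (B \<union> C) = S - B - C" by auto
      have e2: "(B \<union> C) - B = C" using CS by auto
      have e3: "S - B = C \<union> (S - B - C)" using CS by auto
      have cc: "gsign (B \<union> C) (S - B - C) * gsign B C = gsign B (C \<union> (S - B - C)) * gsign C (S - B - C)"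
        by (rule gsign_cocycle) (use fB CS in auto)
      have "gsign (B \<union> C) (S - (B \<union> C)) * (gsign B (B \<union> C - B) * u B * v (B \<union> C - B)) * w (S - (B \<union> C))
          = (gsign (B \<union> C) (S - B - C) * gsign B C) * (u B * v C * w (S - B - C))"
        unfolding e1 e2 by (simp only: ac_simps)
      also have "\<dots> = (gsign B (C \<union> (S - B - C)) * gsign C (S - B - C)) * (u B * v C * w (S - B - C))"
        by (simp only: cc)
      also have "\<dots> = gsign B (S - B) * (u B * (gsign C (S - B - C) * v C * w (S - B - C)))"
        unfolding e3[symmetric] by (simp only: ac_simps)
      finally have calc: "gsign (B \<union> C) (S - (B \<union> C)) * (gsign B (B \<union> C - B) * u B * v (B \<union> C - B)) * w (S - (B \<union> C)) = gsign B (S - B) * (u B * (gsign C (S - B - C) * v C * w (S - B - C)))" .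
      show "(case (case a of (A, B) \<Rightarrow> (B, A - B)) of (B, C) \<Rightarrow>
            gsign B (S - B) * (u B * (gsign C (S - B - C) * v C * w (S - B - C)))) =
         (case a of (A, B) \<Rightarrow> gsign A (S - A) * (gsign B (A - B) * u B * v (A - B)) * w (S - A))"
        unfolding \<open>a = (A,B)\<close> prod.case C_def[symmetric]
        using calc[unfolded AU[symmetric] C_def[symmetric]] by (simp only: eq_commute)
    qed auto
    also have "\<dots> = gmul u (gmul v w) S"
      by (simp add: gmul_def sum_distrib_left sum.Sigma[symmetric] fin mult.assoc)
    finally show ?thesis .
  qed
qed

lemma gsign_empty1 [simp]: "gsign {} B = 1" and gsign_empty2 [simp]: "gsign A {} = 1"
  by (simp_all add: gsign_def)

lemma gmul_one_left: "(\<forall>S. infinite S \<longrightarrow> u S = 0) \<Longrightarrow> gmul gone u = u"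
proof
  fix S assume u: "\<forall>S. infinite S \<longrightarrow> u S = 0"
  show "gmul gone u S = u S"
  proof (cases "finite S")
    case True
    have "gmul gone u S = (\<Sum>A\<in>Pow S. if A = {} then u S else 0)"
      unfolding gmul_def gone_def by (rule sum.cong) auto
    also have "\<dots> = u S" using True by (simp add: sum.delta)
    finally show ?thesis .
  qed (use u in \<open>simp add: gmul_infinite\<close>)
qed

lemma gmul_one_right: "(\<forall>S. infinite S \<longrightarrow> u S = 0) \<Longrightarrow> gmul u gone = u"
proof
  fix S assume u: "\<forall>S. infinite S \<longrightarrow> u S = 0"
  show "gmul u gone S = u S"
  proof (cases "finite S")
    case True
    have "gmul u gone S = (\<Sum>A\<in>Pow S. if A = S then u S else 0)"
      unfolding gmul_def gone_def by (rule sum.cong) auto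
    also have "\<dots> = u S" using True by (simp add: sum.delta)
    finally show ?thesis .
  qed (use u in \<open>simp add: gmul_infinite\<close>)
qed

instantiation gr :: ring_1
begin
lift_definition zero_gr :: gr is gzero by (simp add: gzero_def)
lift_definition one_gr :: gr is gone by (auto simp: gone_def)
lift_definition plus_gr :: "gr \<Rightarrow> gr \<Rightarrow> gr" is gadd by (simp add: gadd_def)
lift_definition uminus_gr :: "gr \<Rightarrow> gr" is "\<lambda>u S. - u S" by simp
lift_definition minus_gr :: "gr \<Rightarrow> gr \<Rightarrow> gr" is "\<lambda>u v S. u S - v S" by simp
lift_definition times_gr :: "gr \<Rightarrow> gr \<Rightarrow> gr" is gmul by (simp add: gmul_infinite)
instance
proof
  fix a b c :: gr
  show "a * b * c = a * (b * c)" by transfer (rule gmul_assoc)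
  show "a + b + c = a + (b + c)" by transfer (simp add: gadd_def add.assoc)
  show "a + b = b + a" by transfer (simp add: gadd_def add.commute)
  show "0 + a = a" by transfer (simp add: gadd_def gzero_def)
  show "- a + a = 0" by transfer (simp add: gadd_def gzero_def)
  show "a - b = a + - b" by transfer (simp add: gadd_def)
  show "(a + b) * c = a * c + b * c"
    by transfer (simp add: gadd_def gmul_def distrib_left distrib_right sum.distrib fun_eq_iff)
  show "a * (b + c) = a * b + a * c"
    by transfer (simp add: gadd_def gmul_def distrib_left distrib_right sum.distrib fun_eq_iff)
  show "1 * a = a" by transfer (rule gmul_one_left)
  show "a * 1 = a" by transfer (rule gmul_one_right)
  show "(0::gr) \<noteq> 1" by transfer (simp add: gzero_def gone_def fun_eq_iff)
qed
end


lift_definition cst :: "complex \<Rightarrow> gr" is "\<lambda>t S. if S = {} then t else 0" by auto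
lift_definition gg :: "nat \<Rightarrow> gr" is gen by (auto simp: gen_def)

lemma rg_zero: "rg 0 = gzero" by (simp add: zero_gr.rep_eq)
lemma rg_one: "rg 1 = gone" by (simp add: one_gr.rep_eq)
lemma rg_plus: "rg (a + b) = gadd (rg a) (rg b)" by (simp add: plus_gr.rep_eq)
lemma rg_times: "rg (a * b) = gmul (rg a) (rg b)" by (simp add: times_gr.rep_eq)
lemma rg_gg: "rg (gg i) = gen i" by (simp add: gg.rep_eq)
lemma rg_fin: "infinite S \<Longrightarrow> rg a S = 0" using rg[of a] by auto

lemma cst_mult_rep: "rg (cst t * a) = gscale t (rg a)"
proof -
  have "gmul (rg (cst t)) (rg a) S = t * rg a S" for S
  proof (cases "finite S")
    case True
    have "gmul (rg (cst t)) (rg a) S = (\<Sum>A\<in>Pow S. if A = {} then t * rg a S else 0)"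
      unfolding gmul_def cst.rep_eq by (rule sum.cong) auto
    then show ?thesis using True by (simp add: sum.delta)
  qed (simp add: gmul_infinite rg_fin)
  then show ?thesis by (simp add: rg_times gscale_def fun_eq_iff)
qed

lemma mult_cst_rep: "rg (a * cst t) = gscale t (rg a)"
proof -
  have "gmul (rg a) (rg (cst t)) S = t * rg a S" for S
  proof (cases "finite S")
    case True
    have "gmul (rg a) (rg (cst t)) S = (\<Sum>A\<in>Pow S. if A = S then t * rg a S else 0)"
      unfolding gmul_def cst.rep_eq by (rule sum.cong) auto
    then show ?thesis using True by (simp add: sum.delta)
  qed (simp add: gmul_infinite rg_fin)
  then show ?thesis by (simp add: rg_times gscale_def fun_eq_iff)
qed

lemma cst_central: "cst t * a = a * cst t"
  using cst_mult_rep[of t a] mult_cst_rep[of a t] rg_inject by metis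

lemma cst_add: "cst (s + t) = cst s + cst t" by transfer (auto simp: gadd_def)
lemma cst_zero [simp]: "cst 0 = 0" by transfer (auto simp: gzero_def)
lemma cst_one [simp]: "cst 1 = 1" by transfer (auto simp: gone_def)
lemma cst_mult: "cst (s * t) = cst s * cst t"
proof -
  have "rg (cst s * cst t) = rg (cst (s * t))"
    by (simp add: cst_mult_rep gscale_def cst.rep_eq fun_eq_iff)
  then show ?thesis by (simp add: rg_inject)
qed
lemma cst_uminus: "cst (- t) = - cst t" by transfer auto
lemma cst_sum: "cst (sum f I) = (\<Sum>i\<in>I. cst (f i))"
  by (induction I rule: infinite_finite_induct) (auto simp: cst_add)
lemma cst_of_nat: "cst (of_nat k) = of_nat k"
  by (induction k) (auto simp: cst_add)

lemma gen_mult_gen: "gmul (gen i) (gen j) = (\<lambda>S. if S = {i, j} \<and> i \<noteq> j then (if j < i then -1 else 1) else 0)"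
proof
  fix S
  show "gmul (gen i) (gen j) S = (if S = {i, j} \<and> i \<noteq> j then (if j < i then -1 else 1) else 0)"
  proof (cases "finite S")
    case True
    have "gmul (gen i) (gen j) S = (\<Sum>A\<in>Pow S. if A = {i} then (if S - {i} = {j} then gsign {i} {j} else 0) else 0)"
      unfolding gmul_def gen_def by (rule sum.cong) auto
    also have "\<dots> = (if {i} \<subseteq> S then (if S - {i} = {j} then gsign {i} {j} else 0) else 0)"
      using True by (simp add: sum.delta)
    also have "\<dots> = (if S = {i, j} \<and> i \<noteq> j then (if j < i then -1 else 1) else 0)"
    proof -
      have c: "({i} \<subseteq> S \<and> S - {i} = {j}) = (S = {i, j} \<and> i \<noteq> j)" by auto
      have "gsign {i} {j} = (if j < i then -1 else 1)"
      proof -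
        have "{(a, b). a \<in> {i} \<and> b \<in> {j} \<and> b < a} = (if j < i then {(i, j)} else {})" by auto
        then show ?thesis by (simp add: gsign_def)
      qed
      then show ?thesis using c by auto
    qed
    finally show ?thesis .
  next
    case False
    then show ?thesis by (auto simp: gmul_infinite)
  qed
qed

lemma gg_anti: "gg i * gg j = - (gg j * gg i)"
  by transfer (auto simp: gen_mult_gen fun_eq_iff insert_commute)

lemma gg_sq: "gg i * gg i = 0"
  by transfer (auto simp: gen_mult_gen fun_eq_iff gzero_def)

lemma rg_sum: "rg (sum f I) = gsum (\<lambda>i. rg (f i)) I"
proof (induction I rule: infinite_finite_induct)
  case (infinite A) then show ?case by (simp add: gsum_def rg_zero gzero_def)
next
  case empty then show ?case by (simp add: gsum_def rg_zero gzero_def)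
next
  case (insert x F) then show ?case by (simp add: gsum_def rg_plus gadd_def fun_eq_iff)
qed

lemma rg_pow: "rg (a ^ k) = gpow (rg a) k"
  by (induction k) (simp_all add: gpow_def rg_one rg_times)


definition inR :: "nat \<Rightarrow> gr \<Rightarrow> bool" where "inR n u \<longleftrightarrow> rg u \<in> Rgr n"

lemma inR_zero [simp]: "inR n 0" by (simp add: inR_def Rgr_def rg_zero gzero_def)
lemma inR_one [simp]: "inR n 1" by (simp add: inR_def Rgr_def rg_one gone_def)
lemma inR_cst [simp]: "inR n (cst t)" by (simp add: inR_def Rgr_def cst.rep_eq)
lemma inR_gg: "i < 2 * n \<Longrightarrow> inR n (gg i)" by (simp add: inR_def Rgr_def rg_gg gen_def)
lemma inR_add: "inR n a \<Longrightarrow> inR n b \<Longrightarrow> inR n (a + b)"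
proof (unfold inR_def Rgr_def, safe)
  fix S x assume a: "\<forall>S. rg a S \<noteq> 0 \<longrightarrow> S \<subseteq> {..<2 * n}" and b: "\<forall>S. rg b S \<noteq> 0 \<longrightarrow> S \<subseteq> {..<2 * n}"
    and ne: "rg (a + b) S \<noteq> 0" and x: "x \<in> S"
  from ne have "rg a S \<noteq> 0 \<or> rg b S \<noteq> 0" by (auto simp: rg_plus gadd_def)
  then show "x < 2 * n" using a b x by blast
qed
lemma inR_uminus: "inR n a \<Longrightarrow> inR n (- a)"
  by (auto simp: inR_def Rgr_def uminus_gr.rep_eq)
lemma inR_mult: "inR n a \<Longrightarrow> inR n b \<Longrightarrow> inR n (a * b)"
proof (unfold inR_def Rgr_def, safe)
  fix S x assume a: "\<forall>S. rg a S \<noteq> 0 \<longrightarrow> S \<subseteq> {..<2 * n}" and b: "\<forall>S. rg b S \<noteq> 0 \<longrightarrow> S \<subseteq> {..<2 * n}"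
    and ne: "rg (a * b) S \<noteq> 0" and x: "x \<in> S"
  from ne have "(\<Sum>A\<in>Pow S. gsign A (S - A) * rg a A * rg b (S - A)) \<noteq> 0"
    by (simp add: rg_times gmul_def)
  then obtain A where A: "A \<subseteq> S" "rg a A \<noteq> 0" "rg b (S - A) \<noteq> 0"
    by (metis (no_types, lifting) PowD mult_eq_0_iff sum.neutral)
  then have "A \<subseteq> {..<2*n}" "S - A \<subseteq> {..<2*n}" using a b by auto
  then show "x < 2 * n" using x by auto
qed
lemma inR_sum: "(\<And>i. i \<in> I \<Longrightarrow> inR n (f i)) \<Longrightarrow> inR n (sum f I)"
  by (induction I rule: infinite_finite_induct) (auto intro: inR_add)
lemma inR_diff: "inR n a \<Longrightarrow> inR n b \<Longrightarrow> inR n (a - b)"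
  using inR_add inR_uminus by (metis diff_conv_add_uminus)
lemma inR_pow: "inR n a \<Longrightarrow> inR n (a ^ k)"
  by (induction k) (auto intro: inR_mult)

definition QX :: "nat \<Rightarrow> (nat \<Rightarrow> nat \<Rightarrow> nat \<Rightarrow> complex) \<Rightarrow> nat \<Rightarrow> gr" where
  "QX n c k = (\<Sum>(a, b)\<in>{..<n} \<times> {..<n}. cst (c a b k) * (gg a * gg b))"
definition QY :: "nat \<Rightarrow> (nat \<Rightarrow> nat \<Rightarrow> nat \<Rightarrow> complex) \<Rightarrow> nat \<Rightarrow> gr" where
  "QY n c k = (\<Sum>(a, b)\<in>{..<n} \<times> {..<n}. cst (c a b k) * (gg (n + a) * gg (n + b)))"

lemma rg_QX: "rg (QX n c k) = gbracket n c (xgen n) (xgen n) k"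
  unfolding QX_def gbracket_def rg_sum split_def cst_mult_rep
  by (simp add: rg_times rg_gg xgen_def)
lemma rg_QY: "rg (QY n c k) = gbracket n c (ygen n) (ygen n) k"
  unfolding QY_def gbracket_def rg_sum split_def cst_mult_rep
  by (simp add: rg_times rg_gg ygen_def)

definition inJ :: "nat \<Rightarrow> (nat \<Rightarrow> nat \<Rightarrow> nat \<Rightarrow> complex) \<Rightarrow> gr \<Rightarrow> bool" where
  "inJ n c u \<longleftrightarrow> rg u \<in> Jideal n c"

lemma rg_ag_R: "r \<in> Rgr n \<Longrightarrow> rg (ag r) = r"
proof (rule ag_inverse, safe)
  fix S :: "nat set" assume r: "r \<in> Rgr n" and S: "infinite S"
  show "r S = 0"
  proof (rule ccontr)
    assume "r S \<noteq> 0"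
    then have "S \<subseteq> {..<2*n}" using r by (auto simp: Rgr_def)
    then show False using S finite_subset by blast
  qed
qed

lemma inJ_zero [simp]: "inJ n c 0" by (simp add: inJ_def Jideal_def rg_zero gideal.zero_in)
lemma inJ_add: "inJ n c a \<Longrightarrow> inJ n c b \<Longrightarrow> inJ n c (a + b)"
  by (simp add: inJ_def Jideal_def rg_plus gideal.add_in)
lemma inJ_lmul: "inR n r \<Longrightarrow> inJ n c a \<Longrightarrow> inJ n c (r * a)"
  by (simp add: inJ_def inR_def Jideal_def rg_times gideal.lmul_in)
lemma inJ_rmul: "inR n r \<Longrightarrow> inJ n c a \<Longrightarrow> inJ n c (a * r)"
  by (simp add: inJ_def inR_def Jideal_def rg_times gideal.rmul_in)
lemma inJ_cst: "inJ n c a \<Longrightarrow> inJ n c (cst t * a)"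
  by (rule inJ_lmul) simp_all
lemma inJ_uminus: "inJ n c a \<Longrightarrow> inJ n c (- a)"
  using inJ_cst[of n c a "-1"] by (simp add: cst_uminus)
lemma inJ_diff: "inJ n c a \<Longrightarrow> inJ n c b \<Longrightarrow> inJ n c (a - b)"
  using inJ_add inJ_uminus by (metis diff_conv_add_uminus)
lemma inJ_sum: "(\<And>i. i \<in> I \<Longrightarrow> inJ n c (f i)) \<Longrightarrow> inJ n c (sum f I)"
  by (induction I rule: infinite_finite_induct) (auto intro: inJ_add)
lemma inJ_QX: "k < n \<Longrightarrow> inJ n c (QX n c k)"
  by (simp add: inJ_def Jideal_def rg_QX gideal.gen_in)
lemma inJ_QY: "k < n \<Longrightarrow> inJ n c (QY n c k)"
  by (simp add: inJ_def Jideal_def rg_QY gideal.gen_in)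


abbreviation pmono :: "(nat \<Rightarrow>\<^sub>0 nat) \<Rightarrow> complex \<Rightarrow> cpoly" where "pmono \<equiv> Poly_Mapping.single"
abbreviation lk :: "('a \<Rightarrow>\<^sub>0 'b::zero) \<Rightarrow> 'a \<Rightarrow> 'b" where "lk \<equiv> Poly_Mapping.lookup"
abbreviation ks :: "('a \<Rightarrow>\<^sub>0 'b::zero) \<Rightarrow> 'a set" where "ks \<equiv> Poly_Mapping.keys"
abbreviation ee :: "nat \<Rightarrow> (nat \<Rightarrow>\<^sub>0 nat)" where "ee i \<equiv> Poly_Mapping.single i (1::nat)"

lemma poly_expand: "(P::cpoly) = (\<Sum>\<alpha>\<in>ks P. pmono \<alpha> (lk P \<alpha>))"
proof (rule poly_mapping_eqI)
  fix k
  have "lk (\<Sum>\<alpha>\<in>ks P. pmono \<alpha> (lk P \<alpha>)) k = (\<Sum>\<alpha>\<in>ks P. if \<alpha> = k then lk P \<alpha> else 0)"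
    by (simp add: lookup_sum lookup_single when_def)
  also have "\<dots> = lk P k" by (simp add: sum.delta in_keys_iff)
  finally show "lk P k = lk (\<Sum>\<alpha>\<in>ks P. pmono \<alpha> (lk P \<alpha>)) k" by simp
qed

lemma additive_expand:
  fixes f :: "cpoly \<Rightarrow> 'b::comm_monoid_add"
  assumes add: "\<And>P Q. f (P + Q) = f P + f Q" and z: "f 0 = 0"
  shows "f P = (\<Sum>\<alpha>\<in>ks P. f (pmono \<alpha> (lk P \<alpha>)))"
proof -
  have fs: "f (sum g I) = (\<Sum>i\<in>I. f (g i))" for g :: "'x \<Rightarrow> cpoly" and I
    by (induction I rule: infinite_finite_induct) (simp_all add: z add)
  show ?thesis by (subst poly_expand) (rule fs)
qed

lemma pdiff_gen:
  assumes "finite K" "ks P \<subseteq> K"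
  shows "pdiff i P = (\<Sum>\<alpha>\<in>K. pmono (\<alpha> - ee i) (of_nat (lk \<alpha> i) * lk P \<alpha>))"
  unfolding pdiff_def
  by (rule sum.mono_neutral_left) (use assms in \<open>auto simp: in_keys_iff\<close>)

lemma pdiff_add: "pdiff i (P + Q) = pdiff i P + pdiff i Q"
proof -
  let ?K = "ks P \<union> ks Q"
  have "pdiff i (P + Q) = (\<Sum>\<alpha>\<in>?K. pmono (\<alpha> - ee i) (of_nat (lk \<alpha> i) * lk (P + Q) \<alpha>))"
    by (rule pdiff_gen) (use keys_add[of P Q] in auto)
  also have "\<dots> = (\<Sum>\<alpha>\<in>?K. pmono (\<alpha> - ee i) (of_nat (lk \<alpha> i) * lk P \<alpha>))
      + (\<Sum>\<alpha>\<in>?K. pmono (\<alpha> - ee i) (of_nat (lk \<alpha> i) * lk Q \<alpha>))"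
    by (simp add: lookup_add distrib_left single_add sum.distrib)
  also have "\<dots> = pdiff i P + pdiff i Q"
    by (subst (1 2) pdiff_gen[of ?K]) auto
  finally show ?thesis .
qed

lemma pdiff_zero [simp]: "pdiff i 0 = 0" by (simp add: pdiff_def)

lemma pdiff_sum: "pdiff i (sum f I) = (\<Sum>x\<in>I. pdiff i (f x))"
  by (induction I rule: infinite_finite_induct) (simp_all add: pdiff_add)

lemma pdiff_mono: "pdiff i (pmono \<alpha> a) = pmono (\<alpha> - ee i) (of_nat (lk \<alpha> i) * a)"
  by (subst pdiff_gen[of "{\<alpha>}"]) auto

lemma pdiff_uminus: "pdiff i (- P) = - pdiff i P"
  by (metis add_eq_0_iff pdiff_add pdiff_zero neg_eq_iff_add_eq_0)

lemma pdiff_diff: "pdiff i (P - Q) = pdiff i P - pdiff i Q"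
  by (metis diff_conv_add_uminus pdiff_add pdiff_uminus)

lemma lk_minus_ee: "lk (\<alpha> - ee i) k = lk \<alpha> k - (if k = i then 1 else 0)"
  by (simp add: lookup_minus lookup_single when_def)
lemma lk_minus_ee': "lk (\<alpha> - Poly_Mapping.single i (Suc 0)) k = lk \<alpha> k - (if k = i then 1 else 0)"
  by (simp add: lookup_minus lookup_single when_def)

lemma minus_ee_add:
  assumes "0 < lk \<alpha> i"
  shows "\<alpha> - Poly_Mapping.single i (Suc 0) + \<beta> = \<alpha> + \<beta> - Poly_Mapping.single i (Suc 0)"
  by (rule poly_mapping_eqI) (use assms in \<open>auto simp: lookup_add lookup_minus lookup_single when_def\<close>)

lemma pdiff_mono_mult:
  "pdiff i (pmono \<alpha> a * pmono \<beta> b) = pdiff i (pmono \<alpha> a) * pmono \<beta> b + pmono \<alpha> a * pdiff i (pmono \<beta> b)"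
proof -
  have l: "pdiff i (pmono \<alpha> a) * pmono \<beta> b = pmono (\<alpha> + \<beta> - ee i) (of_nat (lk \<alpha> i) * a * b)"
  proof (cases "lk \<alpha> i = 0")
    case True then show ?thesis by (simp add: pdiff_mono)
  next
    case False then show ?thesis by (simp add: pdiff_mono mult_single minus_ee_add)
  qed
  have r: "pmono \<alpha> a * pdiff i (pmono \<beta> b) = pmono (\<alpha> + \<beta> - ee i) (of_nat (lk \<beta> i) * a * b)"
  proof (cases "lk \<beta> i = 0")
    case True then show ?thesis by (simp add: pdiff_mono)
  next
    case False then show ?thesis
      by (simp add: pdiff_mono mult_single add.commute[of \<alpha>] minus_ee_add[of \<beta> i \<alpha>] mult_ac)
  qed
  show ?thesis
    unfolding l r
    by (simp only: mult_single pdiff_mono single_add[symmetric] lookup_add of_nat_add) (simp add: ring_distribs mult_ac)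
qed

lemma pdiff_mult: "pdiff i (P * Q) = pdiff i P * Q + P * pdiff i Q"
proof -
  have "pdiff i (P * Q) = pdiff i ((\<Sum>\<alpha>\<in>ks P. pmono \<alpha> (lk P \<alpha>)) * (\<Sum>\<beta>\<in>ks Q. pmono \<beta> (lk Q \<beta>)))"
    by (simp flip: poly_expand)
  also have "\<dots> = (\<Sum>\<alpha>\<in>ks P. \<Sum>\<beta>\<in>ks Q. pdiff i (pmono \<alpha> (lk P \<alpha>)) * pmono \<beta> (lk Q \<beta>)
                    + pmono \<alpha> (lk P \<alpha>) * pdiff i (pmono \<beta> (lk Q \<beta>)))"
    by (simp only: sum_product pdiff_sum pdiff_mono_mult)
  also have "\<dots> = pdiff i (\<Sum>\<alpha>\<in>ks P. pmono \<alpha> (lk P \<alpha>)) * (\<Sum>\<beta>\<in>ks Q. pmono \<beta> (lk Q \<beta>))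
      + (\<Sum>\<alpha>\<in>ks P. pmono \<alpha> (lk P \<alpha>)) * pdiff i (\<Sum>\<beta>\<in>ks Q. pmono \<beta> (lk Q \<beta>))"
    by (simp only: sum_product pdiff_sum sum.distrib)
  finally show ?thesis by (simp flip: poly_expand)
qed

lemma pvar_mono: "pvar k = pmono (ee k) 1" by (simp add: pvar_def)
lemma pconst_mono: "pconst t = pmono 0 t" by (simp add: pconst_def)

lemma pdiff_pvar: "pdiff i (pvar k) = (if i = k then 1 else 0)"
  by (simp add: pvar_mono pdiff_mono lookup_single when_def)

lemma pdiff_pconst [simp]: "pdiff i (pconst t) = 0"
  by (simp add: pconst_mono pdiff_mono)

lemma pconst_mult_pconst: "pconst s * pconst t = pconst (s * t)"
  by (simp add: pconst_mono mult_single)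
lemma pconst_add: "pconst (s + t) = pconst s + pconst t"
  by (simp add: pconst_mono single_add)
lemma pconst_zero [simp]: "pconst 0 = 0" by (simp add: pconst_mono)
lemma pconst_one [simp]: "pconst 1 = 1" by (simp add: pconst_mono)

lemma pdiff_pconst_mult: "pdiff i (pconst t * P) = pconst t * pdiff i P"
  by (simp add: pdiff_mult)

lemma pdiff_of_nat_mult: "pdiff i (of_nat k * P) = of_nat k * pdiff i P"
proof -
  have "(of_nat k :: cpoly) = pconst (of_nat k)" by (simp add: pconst_mono)
  then show ?thesis by (simp add: pdiff_pconst_mult)
qed

lemma pdiff_commute: "pdiff i (pdiff j P) = pdiff j (pdiff i P)"
proof -
  have m: "pdiff i (pdiff j (pmono \<alpha> a)) = pdiff j (pdiff i (pmono \<alpha> a))" for \<alpha> a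
  proof (cases "i = j")
    case False
    have "\<alpha> - ee j - ee i = \<alpha> - ee i - ee j"
      by (rule poly_mapping_eqI) (simp add: lk_minus_ee')
    then show ?thesis using False by (simp add: pdiff_mono lk_minus_ee' mult_ac)
  qed simp
  have "pdiff i (pdiff j P) = (\<Sum>\<alpha>\<in>ks P. pdiff i (pdiff j (pmono \<alpha> (lk P \<alpha>))))"
    by (subst poly_expand) (simp add: pdiff_sum)
  also have "\<dots> = (\<Sum>\<alpha>\<in>ks P. pdiff j (pdiff i (pmono \<alpha> (lk P \<alpha>))))" by (simp add: m)
  also have "\<dots> = pdiff j (pdiff i P)"
    by (subst (2) poly_expand) (simp add: pdiff_sum)
  finally show ?thesis .
qed


lemma single_sum: "Poly_Mapping.single k (sum f A) = (\<Sum>i\<in>A. Poly_Mapping.single k (f i))"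
  by (induction A rule: infinite_finite_induct) (simp_all add: single_add)

lemma pvar_mult_pdiff_mono:
  "pvar m * pdiff m (pmono \<alpha> a) = pmono \<alpha> (of_nat (lk \<alpha> m) * a)"
proof (cases "lk \<alpha> m = 0")
  case True then show ?thesis by (simp add: pdiff_mono)
next
  case False
  have "ee m + (\<alpha> - ee m) = \<alpha>"
    by (rule poly_mapping_eqI) (use False in \<open>auto simp: lookup_add lookup_minus lookup_single when_def\<close>)
  then show ?thesis by (simp add: pvar_mono pdiff_mono mult_single)
qed

lemma euler:
  assumes "poly_in_vars n P" "homogeneous d P"
  shows "(\<Sum>m<n. pvar m * pdiff m P) = of_nat d * P"
proof -
  have "(\<Sum>m<n. pvar m * pdiff m P) = (\<Sum>m<n. \<Sum>\<alpha>\<in>ks P. pvar m * pdiff m (pmono \<alpha> (lk P \<alpha>)))"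
    by (subst poly_expand) (simp add: pdiff_sum sum_distrib_left)
  also have "\<dots> = (\<Sum>\<alpha>\<in>ks P. \<Sum>m<n. pmono \<alpha> (of_nat (lk \<alpha> m) * lk P \<alpha>))"
    by (simp add: pvar_mult_pdiff_mono sum.swap[of _ "{..<n}"])
  also have "\<dots> = (\<Sum>\<alpha>\<in>ks P. pmono \<alpha> (of_nat d * lk P \<alpha>))"
  proof (rule sum.cong[OF refl])
    fix \<alpha> assume a: "\<alpha> \<in> ks P"
    have "(\<Sum>m<n. lk \<alpha> m) = (\<Sum>m\<in>ks \<alpha>. lk \<alpha> m)"
      by (rule sum.mono_neutral_right) (use a assms(1) in \<open>auto simp: poly_in_vars_def in_keys_iff\<close>)
    also have "\<dots> = d" using a assms(2) by (simp add: homogeneous_def)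
    finally have "(\<Sum>m<n. of_nat (lk \<alpha> m) * lk P \<alpha>) = of_nat d * lk P \<alpha>"
      by (metis of_nat_sum sum_distrib_right)
    then show "(\<Sum>m<n. pmono \<alpha> (of_nat (lk \<alpha> m) * lk P \<alpha>)) = pmono \<alpha> (of_nat d * lk P \<alpha>)"
      by (subst single_sum[symmetric]) simp
  qed
  also have "\<dots> = of_nat d * P"
    by (subst (2) poly_expand) (simp add: sum_distrib_left mult_single flip: single_of_nat)
  finally show ?thesis .
qed

definition Lop :: "nat \<Rightarrow> (nat \<Rightarrow> nat \<Rightarrow> nat \<Rightarrow> complex) \<Rightarrow> nat \<Rightarrow> cpoly \<Rightarrow> cpoly" where
  "Lop n c a G = (\<Sum>b<n. \<Sum>k<n. pconst (c a k b) * pvar k * pdiff b G)"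

lemma invariant_Lop: "invariant_poly n c F \<Longrightarrow> a < n \<Longrightarrow> Lop n c a F = 0"
  by (simp add: invariant_poly_def Lop_def)

lemma dLop:
  assumes "m < n"
  shows "pdiff m (Lop n c a G) = (\<Sum>b<n. pconst (c a m b) * pdiff b G) + Lop n c a (pdiff m G)"
proof -
  have "pdiff m (Lop n c a G) = (\<Sum>b<n. \<Sum>k<n. (if m = k then pconst (c a k b) * pdiff b G else 0)
           + pconst (c a k b) * pvar k * pdiff b (pdiff m G))"
    unfolding Lop_def pdiff_sum
    by (intro sum.cong refl) (simp add: pdiff_mult pdiff_pvar pdiff_commute[of m] algebra_simps)
  also have "\<dots> = (\<Sum>b<n. pconst (c a m b) * pdiff b G) + Lop n c a (pdiff m G)"
    unfolding Lop_def sum.distrib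
    by (simp add: mult.assoc sum.delta assms)
  finally show ?thesis .
qed


definition monG :: "nat \<Rightarrow> (nat \<Rightarrow> gr) \<Rightarrow> (nat \<Rightarrow>\<^sub>0 nat) \<Rightarrow> gr" where
  "monG m w \<alpha> = fold (\<lambda>i acc. acc * w i ^ lk \<alpha> i) [0..<m] 1"

definition evG :: "nat \<Rightarrow> (nat \<Rightarrow> gr) \<Rightarrow> cpoly \<Rightarrow> gr" where
  "evG n w P = (\<Sum>\<alpha>\<in>ks P. cst (lk P \<alpha>) * monG n w \<alpha>)"

lemma fold_rg:
  "fold (\<lambda>i acc. gmul acc (gpow (rg (w i)) (lk \<alpha> i))) xs (rg a) = rg (fold (\<lambda>i acc. acc * w i ^ lk \<alpha> i) xs a)"
  by (induction xs arbitrary: a) (simp_all flip: rg_times rg_pow)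

lemma geval_rg: "geval n P (\<lambda>k. rg (w k)) = rg (evG n w P)"
  unfolding geval_def evG_def rg_sum cst_mult_rep monG_def
  by (simp add: fold_rg[of w _ _ 1, unfolded rg_one])

lemma monG_Suc: "monG (Suc m) w \<alpha> = monG m w \<alpha> * w m ^ lk \<alpha> m"
  by (simp add: monG_def)

lemma monG_0 [simp]: "monG 0 w \<alpha> = 1" by (simp add: monG_def)

definition commute :: "gr \<Rightarrow> gr \<Rightarrow> bool" where "commute x y \<longleftrightarrow> x * y = y * x"

lemma commute_sym: "commute x y \<Longrightarrow> commute y x" by (simp add: commute_def)
lemma commute_one [simp]: "commute x 1" by (simp add: commute_def)
lemma commute_zero [simp]: "commute x 0" by (simp add: commute_def)
lemma commute_cst [simp]: "commute x (cst t)" by (simp add: commute_def cst_central)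
lemma commute_mult: "commute x y \<Longrightarrow> commute x z \<Longrightarrow> commute x (y * z)"
  by (simp add: commute_def) (metis mult.assoc)
lemma commute_add: "commute x y \<Longrightarrow> commute x z \<Longrightarrow> commute x (y + z)"
  by (simp add: commute_def algebra_simps)
lemma commute_uminus: "commute x y \<Longrightarrow> commute x (- y)"
  by (simp add: commute_def)
lemma commute_sum: "(\<And>i. i \<in> I \<Longrightarrow> commute x (f i)) \<Longrightarrow> commute x (sum f I)"
  by (induction I rule: infinite_finite_induct) (auto intro: commute_add)
lemma commute_pow: "commute x y \<Longrightarrow> commute x (y ^ k)"
  by (induction k) (auto intro: commute_mult)

lemma commute_monG: "(\<And>i. commute x (w i)) \<Longrightarrow> commute x (monG m w \<alpha>)"
  by (induction m) (auto simp: monG_Suc intro!: commute_mult commute_pow)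

lemma commute_evG: "(\<And>i. commute x (w i)) \<Longrightarrow> commute x (evG n w P)"
  unfolding evG_def by (auto intro!: commute_sum commute_mult commute_monG)

lemma inR_monG: "(\<And>i. inR N (w i)) \<Longrightarrow> inR N (monG m w \<alpha>)"
  by (induction m) (auto simp: monG_Suc intro!: inR_mult inR_pow)

lemma inR_evG: "(\<And>i. inR N (w i)) \<Longrightarrow> inR N (evG n w P)"
  unfolding evG_def by (auto intro!: inR_sum inR_mult inR_monG)

lemma monG_add:
  assumes wc: "\<And>i j. commute (w i) (w j)"
  shows "monG m w (\<alpha> + \<beta>) = monG m w \<alpha> * monG m w \<beta>"
proof (induction m)
  case (Suc m)
  have c: "commute (w m ^ lk \<alpha> m) (monG m w \<beta>)"
    by (rule commute_sym, rule commute_pow, rule commute_sym, rule commute_monG) (rule commute_sym, rule wc)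
  have "monG (Suc m) w (\<alpha> + \<beta>) = monG m w \<alpha> * monG m w \<beta> * (w m ^ lk \<alpha> m * w m ^ lk \<beta> m)"
    by (simp add: monG_Suc Suc lookup_add power_add)
  also have "\<dots> = monG m w \<alpha> * (w m ^ lk \<alpha> m * monG m w \<beta>) * w m ^ lk \<beta> m"
    using c by (simp add: commute_def mult.assoc)
  also have "\<dots> = monG (Suc m) w \<alpha> * monG (Suc m) w \<beta>"
    by (simp add: monG_Suc mult.assoc)
  finally show ?case .
qed simp

lemma monG_ee: "monG m w (Poly_Mapping.single k (Suc 0)) = (if k < m then w k else 1)"
  by (induction m) (auto simp: monG_Suc lookup_single when_def less_Suc_eq)

lemma monG_zero [simp]: "monG m w 0 = 1"
  by (induction m) (auto simp: monG_Suc)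

lemma evG_gen:
  assumes "finite K" "ks P \<subseteq> K"
  shows "evG n w P = (\<Sum>\<alpha>\<in>K. cst (lk P \<alpha>) * monG n w \<alpha>)"
  unfolding evG_def
  by (rule sum.mono_neutral_left) (use assms in \<open>auto simp: in_keys_iff\<close>)

lemma evG_add: "evG n w (P + Q) = evG n w P + evG n w Q"
proof -
  let ?K = "ks P \<union> ks Q"
  have "evG n w (P + Q) = (\<Sum>\<alpha>\<in>?K. cst (lk (P + Q) \<alpha>) * monG n w \<alpha>)"
    by (rule evG_gen) (use keys_add[of P Q] in auto)
  also have "\<dots> = (\<Sum>\<alpha>\<in>?K. cst (lk P \<alpha>) * monG n w \<alpha>) + (\<Sum>\<alpha>\<in>?K. cst (lk Q \<alpha>) * monG n w \<alpha>)"
    by (simp add: lookup_add cst_add distrib_right sum.distrib)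
  also have "\<dots> = evG n w P + evG n w Q"
    by (subst (1 2) evG_gen[of ?K]) auto
  finally show ?thesis .
qed

lemma evG_zero [simp]: "evG n w 0 = 0" by (simp add: evG_def)

lemma evG_sum: "evG n w (sum f I) = (\<Sum>i\<in>I. evG n w (f i))"
  by (induction I rule: infinite_finite_induct) (simp_all add: evG_add)

lemma evG_uminus: "evG n w (- P) = - evG n w P"
  by (metis add_eq_0_iff evG_add evG_zero neg_eq_iff_add_eq_0)

lemma evG_mono: "evG n w (pmono \<alpha> a) = cst a * monG n w \<alpha>"
  by (subst evG_gen[of "{\<alpha>}"]) auto

lemma evG_mult:
  assumes wc: "\<And>i j. commute (w i) (w j)"
  shows "evG n w (P * Q) = evG n w P * evG n w Q"
proof -
  have m: "evG n w (pmono \<alpha> a * pmono \<beta> b) = evG n w (pmono \<alpha> a) * evG n w (pmono \<beta> b)" for \<alpha> \<beta> a b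
  proof -
    have "evG n w (pmono \<alpha> a * pmono \<beta> b) = cst a * cst b * (monG n w \<alpha> * monG n w \<beta>)"
      by (simp add: mult_single evG_mono monG_add[OF wc] cst_mult)
    also have "\<dots> = cst a * monG n w \<alpha> * (cst b * monG n w \<beta>)"
      by (simp add: mult.assoc cst_central[of b] )
    finally show ?thesis by (simp add: evG_mono)
  qed
  have "evG n w (P * Q) = evG n w ((\<Sum>\<alpha>\<in>ks P. pmono \<alpha> (lk P \<alpha>)) * (\<Sum>\<beta>\<in>ks Q. pmono \<beta> (lk Q \<beta>)))"
    by (simp flip: poly_expand)
  also have "\<dots> = (\<Sum>\<alpha>\<in>ks P. \<Sum>\<beta>\<in>ks Q. evG n w (pmono \<alpha> (lk P \<alpha>)) * evG n w (pmono \<beta> (lk Q \<beta>)))"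
    by (simp only: sum_product evG_sum m)
  also have "\<dots> = evG n w (\<Sum>\<alpha>\<in>ks P. pmono \<alpha> (lk P \<alpha>)) * evG n w (\<Sum>\<beta>\<in>ks Q. pmono \<beta> (lk Q \<beta>))"
    by (simp only: sum_product evG_sum)
  finally show ?thesis by (simp flip: poly_expand)
qed

lemma evG_pconst: "evG n w (pconst t) = cst t"
  by (simp add: pconst_mono evG_mono)

lemma evG_pvar: "k < n \<Longrightarrow> evG n w (pvar k) = w k"
  by (simp add: pvar_mono evG_mono monG_ee)

lemma evG_of_nat: "evG n w (of_nat d) = of_nat d"
  by (simp add: evG_mono cst_of_nat flip: single_of_nat)


definition Zg :: "nat \<Rightarrow> (nat \<Rightarrow> nat \<Rightarrow> nat \<Rightarrow> complex) \<Rightarrow> nat \<Rightarrow> gr" where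
  "Zg n c k = (\<Sum>p<n. \<Sum>q<n. cst (c p q k) * (gg p * gg (n + q)))"

definition Phi :: "nat \<Rightarrow> (nat \<Rightarrow> nat \<Rightarrow> nat \<Rightarrow> complex) \<Rightarrow> cpoly \<Rightarrow> gr" where
  "Phi n c P = evG n (Zg n c) P"

definition FhatG :: "nat \<Rightarrow> (nat \<Rightarrow> nat \<Rightarrow> nat \<Rightarrow> complex) \<Rightarrow> cpoly \<Rightarrow> gr" where
  "FhatG n c P = (\<Sum>a<n. \<Sum>b<n. Phi n c (pdiff a (pdiff b P)) * gg a * gg (n + b))"

lemma sum_prod_nested: "(\<Sum>(a, b)\<in>{..<n} \<times> {..<n}. f a b) = (\<Sum>a<n. \<Sum>b<n. f a b)"
  by (simp add: sum.cartesian_product)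

lemma rg_Zg: "rg (Zg n c k) = gbracket n c (xgen n) (ygen n) k"
proof -
  have "Zg n c k = (\<Sum>(p, q)\<in>{..<n} \<times> {..<n}. cst (c p q k) * (gg p * gg (n + q)))"
    by (simp add: Zg_def sum_prod_nested)
  then show ?thesis
    unfolding gbracket_def
    by (simp only: rg_sum split_def cst_mult_rep) (simp add: rg_times rg_gg xgen_def ygen_def)
qed

lemma Fhat_rg: "Fhat n c P = rg (FhatG n c P)"
proof -
  have gb: "gbracket n c (xgen n) (ygen n) = (\<lambda>k. rg (Zg n c k))"
    by (simp add: rg_Zg fun_eq_iff)
  have "FhatG n c P = (\<Sum>(a, b)\<in>{..<n} \<times> {..<n}. Phi n c (pdiff a (pdiff b P)) * gg a * gg (n + b))"
    by (simp add: FhatG_def sum_prod_nested)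
  then show ?thesis
    unfolding Fhat_def gb geval_rg
    by (simp only: rg_sum split_def) (simp add: rg_times rg_gg xgen_def ygen_def Phi_def)
qed

lemma QX_nested: "QX n c k = (\<Sum>p<n. \<Sum>r<n. cst (c p r k) * (gg p * gg r))"
  by (simp add: QX_def sum_prod_nested)

lemma gg_comm2: "commute (gg i) (gg p * gg q)"
proof -
  have "gg i * (gg p * gg q) = (gg i * gg p) * gg q" by (simp add: mult.assoc)
  also have "\<dots> = - (gg p * (gg i * gg q))" by (simp add: gg_anti[of i p] mult.assoc)
  also have "\<dots> = gg p * gg q * gg i" by (simp add: gg_anti[of i q] mult.assoc)
  finally show ?thesis by (simp add: commute_def)
qed

lemma gg_comm_Zg: "commute (gg i) (Zg n c k)"
  unfolding Zg_def by (intro commute_sum commute_mult commute_cst gg_comm2)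

lemma Zg_comm_gg: "commute (Zg n c k) (gg i)"
  by (rule commute_sym) (rule gg_comm_Zg)

lemma Zg_comm_Zg: "commute (Zg n c j) (Zg n c k)"
  unfolding Zg_def[of n c k] by (intro commute_sum commute_mult commute_cst Zg_comm_gg)

lemma gg_comm_Phi: "commute (gg i) (Phi n c P)"
  unfolding Phi_def by (rule commute_evG) (rule gg_comm_Zg)

lemma Phi_comm_gg: "Phi n c P * gg i = gg i * Phi n c P"
  using gg_comm_Phi by (simp add: commute_def)

lemma Zg_comm_gg': "Zg n c k * gg i = gg i * Zg n c k"
  using Zg_comm_gg by (simp add: commute_def)

lemma inR_Zg: "inR n (Zg n c k)"
  unfolding Zg_def by (intro inR_sum inR_mult inR_cst inR_gg) auto

lemma inR_Phi: "inR n (Phi n c P)"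
  unfolding Phi_def by (rule inR_evG) (rule inR_Zg)

lemma Phi_add: "Phi n c (P + Q) = Phi n c P + Phi n c Q" by (simp add: Phi_def evG_add)
lemma Phi_sum: "Phi n c (sum f I) = (\<Sum>i\<in>I. Phi n c (f i))" by (simp add: Phi_def evG_sum)
lemma Phi_mult: "Phi n c (P * Q) = Phi n c P * Phi n c Q"
  unfolding Phi_def by (rule evG_mult) (rule Zg_comm_Zg)
lemma Phi_pconst: "Phi n c (pconst t) = cst t" by (simp add: Phi_def evG_pconst)
lemma Phi_pvar: "k < n \<Longrightarrow> Phi n c (pvar k) = Zg n c k" by (simp add: Phi_def evG_pvar)
lemma Phi_of_nat: "Phi n c (of_nat d) = of_nat d" by (simp add: Phi_def evG_of_nat)
lemma Phi_zero [simp]: "Phi n c 0 = 0" by (simp add: Phi_def)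
lemma Phi_uminus: "Phi n c (- P) = - Phi n c P" by (simp add: Phi_def evG_uminus)

lemma Phi_Lop: "Phi n c (Lop n c a G) = (\<Sum>b<n. \<Sum>k<n. cst (c a k b) * Zg n c k * Phi n c (pdiff b G))"
  unfolding Lop_def Phi_sum Phi_mult Phi_pconst
  by (intro sum.cong refl) (simp add: Phi_pvar)


lemma cst_left: "a * (cst t * b) = cst t * (a * b)"
proof -
  have e: "a * cst t = cst t * a" by (rule cst_central[symmetric])
  show ?thesis by (simp only: mult.assoc[symmetric] e)
qed
lemma cst_left_gg: "gg i * (cst t * b) = cst t * (gg i * b)"
  by (rule cst_left)
lemma swap3: "(\<Sum>k\<in>A. \<Sum>r\<in>B. \<Sum>s\<in>C. f k r s) = (\<Sum>r\<in>B. \<Sum>s\<in>C. \<Sum>k\<in>A. f k r s)"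
proof -
  have "(\<Sum>k\<in>A. \<Sum>r\<in>B. \<Sum>s\<in>C. f k r s) = (\<Sum>r\<in>B. \<Sum>k\<in>A. \<Sum>s\<in>C. f k r s)"
    by (rule sum.swap)
  also have "\<dots> = (\<Sum>r\<in>B. \<Sum>s\<in>C. \<Sum>k\<in>A. f k r s)"
    by (intro sum.cong refl) (rule sum.swap)
  finally show ?thesis .
qed
lemma cst_cst: "cst s * (cst t * b) = cst (s * t) * b"
  by (simp only: cst_mult mult.assoc)
lemma cst_diff: "cst (s - t) = cst s - cst t"
  by (simp only: diff_conv_add_uminus cst_add cst_uminus)

lemma two_cancel: "(2::gr) * x = 2 * y \<Longrightarrow> x = y"
proof -
  assume h: "(2::gr) * x = 2 * y"
  have two: "(2::gr) = cst 2" using cst_of_nat[of 2] by simp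
  have "cst (1/2) * (cst 2 * x) = cst (1/2) * (cst 2 * y)" using h unfolding two by (rule arg_cong)
  then show "x = y" unfolding cst_cst by simp
qed

lemma tn1: "cst a * (gg p * (cst b * (gg r * z))) = cst (a * b) * (gg p * gg r * z)"
  by (simp only: cst_left_gg cst_cst mult.assoc)
lemma tn2: "cst a * (cst b * (gg p * gg r) * z) = cst (a * b) * (gg p * gg r * z)"
  by (simp only: cst_cst mult.assoc)

definition B3 :: "nat \<Rightarrow> (nat \<Rightarrow> nat \<Rightarrow> nat \<Rightarrow> complex) \<Rightarrow> gr" where
  "B3 n T = (\<Sum>p<n. \<Sum>r<n. \<Sum>s<n. cst (T p r s) * (gg p * gg r * gg (n + s)))"

lemma B3_transp: "B3 n T = - B3 n (\<lambda>p r s. T r p s)"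
proof -
  have "B3 n T = (\<Sum>r<n. \<Sum>p<n. \<Sum>s<n. cst (T p r s) * (gg p * gg r * gg (n + s)))"
    unfolding B3_def by (rule sum.swap)
  also have "\<dots> = (\<Sum>r<n. \<Sum>p<n. \<Sum>s<n. - (cst (T p r s) * (gg r * gg p * gg (n + s))))"
    apply (rule sum.cong[OF refl])+
    subgoal for r p s by (simp add: gg_anti[of p r])
    done
  also have "\<dots> = - B3 n (\<lambda>p r s. T r p s)"
    by (simp add: B3_def sum_negf)
  finally show ?thesis .
qed

lemma B3_diff: "B3 n T - B3 n T' = B3 n (\<lambda>p r s. T p r s - T' p r s)"
  by (simp add: B3_def cst_diff left_diff_distrib sum_subtractf)

lemma B3_cong: "(\<And>p r s. p < n \<Longrightarrow> r < n \<Longrightarrow> s < n \<Longrightarrow> T p r s = T' p r s) \<Longrightarrow> B3 n T = B3 n T'"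
  unfolding B3_def by (intro sum.cong refl) auto

lemma two_aux: "x = - y \<Longrightarrow> 2 * x = x - (y::gr)"
  by (simp add: mult_2)

lemma B3_anti:
  assumes "\<And>p r s. p < n \<Longrightarrow> r < n \<Longrightarrow> s < n \<Longrightarrow> T p r s - T r p s = T' p r s - T' r p s"
  shows "B3 n T = B3 n T'"
proof (rule two_cancel)
  have "2 * B3 n T = B3 n T - B3 n (\<lambda>p r s. T r p s)"
    by (rule two_aux) (rule B3_transp)
  also have "\<dots> = B3 n (\<lambda>p r s. T' p r s - T' r p s)"
    unfolding B3_diff by (rule B3_cong) (rule assms)
  also have "\<dots> = B3 n T' - B3 n (\<lambda>p r s. T' r p s)"
    unfolding B3_diff ..
  also have "\<dots> = 2 * B3 n T'"
    by (rule two_aux[symmetric]) (rule B3_transp)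
  finally show "2 * B3 n T = 2 * B3 n T'" .
qed

definition Wg :: "nat \<Rightarrow> (nat \<Rightarrow> nat \<Rightarrow> nat \<Rightarrow> complex) \<Rightarrow> nat \<Rightarrow> gr" where
  "Wg n c j = (\<Sum>p<n. \<Sum>k<n. cst (c p k j) * (gg p * Zg n c k))"

lemma Wg_B3: "Wg n c j = B3 n (\<lambda>p r s. \<Sum>k<n. c p k j * c r s k)"
proof -
  have "Wg n c j = (\<Sum>p<n. \<Sum>k<n. \<Sum>r<n. \<Sum>s<n. cst (c p k j * c r s k) * (gg p * gg r * gg (n + s)))"
    unfolding Wg_def Zg_def
    by (simp only: sum_distrib_left tn1)
  also have "\<dots> = (\<Sum>p<n. \<Sum>r<n. \<Sum>s<n. \<Sum>k<n. cst (c p k j * c r s k) * (gg p * gg r * gg (n + s)))"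
    by (rule sum.cong[OF refl]) (rule swap3)
  also have "\<dots> = B3 n (\<lambda>p r s. \<Sum>k<n. c p k j * c r s k)"
    unfolding B3_def by (simp add: cst_sum sum_distrib_right)
  finally show ?thesis .
qed

lemma RQ_B3: "(\<Sum>s<n. \<Sum>k<n. cst (t * c k s j) * (QX n c k * gg (n + s)))
   = B3 n (\<lambda>p r s. \<Sum>k<n. t * c k s j * c p r k)"
proof -
  have "(\<Sum>s<n. \<Sum>k<n. cst (t * c k s j) * (QX n c k * gg (n + s)))
     = (\<Sum>s<n. \<Sum>k<n. \<Sum>p<n. \<Sum>r<n. cst (t * c k s j * c p r k) * (gg p * gg r * gg (n + s)))"
    unfolding QX_nested
    by (simp only: sum_distrib_left sum_distrib_right tn2)
  also have "\<dots> = (\<Sum>p<n. \<Sum>r<n. \<Sum>s<n. \<Sum>k<n. cst (t * c k s j * c p r k) * (gg p * gg r * gg (n + s)))"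
  proof -
    have "(\<Sum>s<n. \<Sum>k<n. \<Sum>p<n. \<Sum>r<n. f s k p r) = (\<Sum>p<n. \<Sum>r<n. \<Sum>s<n. \<Sum>k<n. f s k p r)"
      for f :: "nat \<Rightarrow> nat \<Rightarrow> nat \<Rightarrow> nat \<Rightarrow> gr"
    proof -
      have "(\<Sum>s<n. \<Sum>k<n. \<Sum>p<n. \<Sum>r<n. f s k p r) = (\<Sum>s<n. \<Sum>p<n. \<Sum>r<n. \<Sum>k<n. f s k p r)"
        by (rule sum.cong[OF refl]) (rule swap3)
      also have "\<dots> = (\<Sum>p<n. \<Sum>r<n. \<Sum>s<n. \<Sum>k<n. f s k p r)" by (rule swap3)
      finally show ?thesis .
    qed
    then show ?thesis .
  qed
  also have "\<dots> = B3 n (\<lambda>p r s. \<Sum>k<n. t * c k s j * c p r k)"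
    unfolding B3_def by (simp add: cst_sum sum_distrib_right)
  finally show ?thesis .
qed

lemma lin_aux: "(A::complex) + - M1 + M2 = 0 \<Longrightarrow> H2 = - H1 \<Longrightarrow> H1 = 1/2 * A \<Longrightarrow> M1 - M2 = H1 - H2"
proof -
  assume h1: "A + - M1 + M2 = 0" and h2: "H2 = - H1" and h3: "H1 = 1/2 * A"
  have a: "M1 - M2 = A" using h1 by (simp add: algebra_simps)
  have b: "H1 - H2 = A" unfolding h2 h3 by simp
  show ?thesis using a b by simp
qed

lemma lie_as1: assumes "simple_quadratic_lie n c" "a < n" "b < n" "k < n" shows "c a b k = - c b a k"
  using conjunct1[OF assms(1)[unfolded simple_quadratic_lie_def]] assms(2-4) by blast
lemma lie_jac: assumes "simple_quadratic_lie n c" "a < n" "b < n" "d < n" "m < n"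
  shows "(\<Sum>k<n. c a b k * c k d m + c b d k * c k a m + c d a k * c k b m) = 0"
  using conjunct1[OF conjunct2[OF assms(1)[unfolded simple_quadratic_lie_def]]] assms(2-5) by blast
lemma lie_as2: assumes "simple_quadratic_lie n c" "a < n" "b < n" "k < n" shows "c a b k = - c a k b"
  using conjunct1[OF conjunct2[OF conjunct2[OF assms(1)[unfolded simple_quadratic_lie_def]]]] assms(2-4) by blast

lemma inJ_Wg:
  assumes lie: "simple_quadratic_lie n c" and j: "j < n"
  shows "inJ n c (Wg n c j)"
proof -
  note as1 = lie_as1[OF lie] and jac = lie_jac[OF lie]
  have key: "(\<Sum>k<n. c p k j * c r s k) - (\<Sum>k<n. c r k j * c p s k)
      = (\<Sum>k<n. (1/2) * c k s j * c p r k) - (\<Sum>k<n. (1/2) * c k s j * c r p k)"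
    if p: "p < n" and r: "r < n" and s: "s < n" for p r s
  proof (rule lin_aux)
    show "(\<Sum>k<n. c p r k * c k s j) + - (\<Sum>k<n. c p k j * c r s k) + (\<Sum>k<n. c r k j * c p s k) = 0"
    proof -
      have J: "(\<Sum>k<n. c p r k * c k s j) + (\<Sum>k<n. c r s k * c k p j) + (\<Sum>k<n. c s p k * c k r j) = 0"
        using jac[OF p r s j] by (simp only: sum.distrib)
      have e1: "(\<Sum>k<n. c r s k * c k p j) = - (\<Sum>k<n. c p k j * c r s k)"
        unfolding sum_negf[symmetric] by (rule sum.cong[OF refl]) (simp add: as1[OF _ p j])
      have e2: "(\<Sum>k<n. c s p k * c k r j) = (\<Sum>k<n. c r k j * c p s k)"
        by (rule sum.cong[OF refl]) (simp add: as1[OF s p] as1[OF _ r j])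
      show ?thesis using J unfolding e1 e2 .
    qed
    show "(\<Sum>k<n. (1/2) * c k s j * c r p k) = - (\<Sum>k<n. (1/2) * c k s j * c p r k)"
      unfolding sum_negf[symmetric] by (rule sum.cong[OF refl]) (simp add: as1[OF r p])
    show "(\<Sum>k<n. (1/2) * c k s j * c p r k) = 1/2 * (\<Sum>k<n. c p r k * c k s j)"
      unfolding sum_distrib_left by (rule sum.cong[OF refl]) (simp add: mult_ac)
  qed
  have "Wg n c j = B3 n (\<lambda>p r s. \<Sum>k<n. (1/2) * c k s j * c p r k)"
    unfolding Wg_B3 by (rule B3_anti) (rule key)
  also have "\<dots> = (\<Sum>s<n. \<Sum>k<n. cst ((1/2) * c k s j) * (QX n c k * gg (n + s)))"
    by (rule RQ_B3[symmetric])
  finally have W: "Wg n c j = \<dots>" .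
  show ?thesis unfolding W
  proof (rule inJ_sum, rule inJ_sum, rule inJ_cst, rule inJ_rmul)
    fix s k assume "s \<in> {..<n}" "k \<in> {..<n}"
    then show "inR n (gg (n + s))" "inJ n c (QX n c k)" by (auto intro: inR_gg inJ_QX)
  qed
qed


lemma Phi_Euler1:
  assumes "poly_in_vars n F" "homogeneous d F"
  shows "(\<Sum>m<n. Zg n c m * Phi n c (pdiff m F)) = of_nat d * Phi n c F"
proof -
  have "Phi n c (\<Sum>m<n. pvar m * pdiff m F) = Phi n c (of_nat d * F)"
    by (simp only: euler[OF assms])
  then show ?thesis
    by (simp add: Phi_sum Phi_mult Phi_pvar Phi_of_nat)
qed

lemma poly_Euler2:
  assumes "poly_in_vars n F" "homogeneous d F" "b < n"
  shows "(\<Sum>m<n. pvar m * pdiff b (pdiff m F)) + pdiff b F = of_nat d * pdiff b F"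
proof -
  have "pdiff b (\<Sum>m<n. pvar m * pdiff m F) = pdiff b (of_nat d * F)"
    by (simp only: euler[OF assms(1,2)])
  moreover have "pdiff b (\<Sum>m<n. pvar m * pdiff m F) = (\<Sum>m<n. pvar m * pdiff b (pdiff m F)) + pdiff b F"
  proof -
    have "pdiff b (\<Sum>m<n. pvar m * pdiff m F)
        = (\<Sum>m<n. pvar m * pdiff b (pdiff m F)) + (\<Sum>m<n. (if b = m then 1 else 0) * pdiff m F)"
      by (simp add: pdiff_sum pdiff_mult pdiff_pvar sum.distrib add.commute)
    also have "(\<Sum>m<n. (if b = m then 1 else 0) * pdiff m F) = pdiff b F"
      using assms(3) by (simp add: if_distrib[of "\<lambda>x. x * _"] sum.delta cong: if_cong)
    finally show ?thesis .
  qed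
  ultimately show ?thesis by (simp add: pdiff_of_nat_mult)
qed

lemma Phi_Euler2:
  assumes "poly_in_vars n F" "homogeneous d F" "b < n"
  shows "(\<Sum>m<n. Zg n c m * Phi n c (pdiff b (pdiff m F))) + Phi n c (pdiff b F) = of_nat d * Phi n c (pdiff b F)"
proof -
  have "Phi n c ((\<Sum>m<n. pvar m * pdiff b (pdiff m F)) + pdiff b F) = Phi n c (of_nat d * pdiff b F)"
    by (simp only: poly_Euler2[OF assms])
  then show ?thesis
    by (simp add: Phi_sum Phi_mult Phi_pvar Phi_of_nat Phi_add)
qed

lemma Phi_D1:
  assumes "invariant_poly n c F" "a < n" "m < n"
  shows "(\<Sum>b<n. cst (c a m b) * Phi n c (pdiff b F))
       + (\<Sum>b<n. \<Sum>k<n. cst (c a k b) * Zg n c k * Phi n c (pdiff b (pdiff m F))) = 0"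
proof -
  have "pdiff m (Lop n c a F) = 0" by (simp add: invariant_Lop[OF assms(1,2)])
  then have "(\<Sum>b<n. pconst (c a m b) * pdiff b F) + Lop n c a (pdiff m F) = 0"
    by (simp add: dLop[OF assms(3)])
  then have "Phi n c ((\<Sum>b<n. pconst (c a m b) * pdiff b F) + Lop n c a (pdiff m F)) = 0"
    by simp
  then show ?thesis
    by (simp only: Phi_add Phi_Lop Phi_sum Phi_mult Phi_pconst)
qed

lemma Phi_D2:
  assumes "invariant_poly n c F" "a < n" "m < n" "r < n"
  shows "(\<Sum>b<n. cst (c a m b) * Phi n c (pdiff r (pdiff b F)))
       + (\<Sum>b<n. cst (c a r b) * Phi n c (pdiff b (pdiff m F)))
       + (\<Sum>b<n. \<Sum>k<n. cst (c a k b) * Zg n c k * Phi n c (pdiff b (pdiff r (pdiff m F)))) = 0"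
proof -
  have "pdiff r (pdiff m (Lop n c a F)) = 0" by (simp add: invariant_Lop[OF assms(1,2)])
  then have "pdiff r ((\<Sum>b<n. pconst (c a m b) * pdiff b F) + Lop n c a (pdiff m F)) = 0"
    by (simp add: dLop[OF assms(3)])
  then have "(\<Sum>b<n. pconst (c a m b) * pdiff r (pdiff b F))
      + ((\<Sum>b<n. pconst (c a r b) * pdiff b (pdiff m F)) + Lop n c a (pdiff r (pdiff m F))) = 0"
    by (simp add: pdiff_add pdiff_sum pdiff_pconst_mult dLop[OF assms(4)])
  then have "Phi n c ((\<Sum>b<n. pconst (c a m b) * pdiff r (pdiff b F))
      + ((\<Sum>b<n. pconst (c a r b) * pdiff b (pdiff m F)) + Lop n c a (pdiff r (pdiff m F)))) = 0"
    by simp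
  then show ?thesis
    by (simp only: Phi_add Phi_Lop Phi_sum Phi_mult Phi_pconst add.assoc)
qed


lemma tn3: "cst t * x * y = x * (cst t * y)"
  by (simp only: mult.assoc cst_left)

lemma ZE: "(\<Sum>m<n. Zg n c m * \<phi> m) = (\<Sum>p<n. \<Sum>q<n. (gg p * gg (n + q)) * (\<Sum>m<n. cst (c p q m) * \<phi> m))"
proof -
  have "(\<Sum>m<n. Zg n c m * \<phi> m) = (\<Sum>m<n. \<Sum>p<n. \<Sum>q<n. cst (c p q m) * (gg p * gg (n + q)) * \<phi> m)"
    unfolding Zg_def by (simp only: sum_distrib_right)
  also have "\<dots> = (\<Sum>p<n. \<Sum>q<n. \<Sum>m<n. cst (c p q m) * (gg p * gg (n + q)) * \<phi> m)"
    by (rule swap3)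
  also have "\<dots> = (\<Sum>p<n. \<Sum>q<n. (gg p * gg (n + q)) * (\<Sum>m<n. cst (c p q m) * \<phi> m))"
    by (simp only: sum_distrib_left tn3)
  finally show ?thesis .
qed

lemma inJ_of_nat_cancel: "0 < d \<Longrightarrow> inJ n c (of_nat d * x) \<Longrightarrow> inJ n c x"
proof -
  assume d: "0 < d" and h: "inJ n c (of_nat d * x)"
  have "inJ n c (cst (1 / of_nat d) * (of_nat d * x))" by (rule inJ_cst[OF h])
  moreover have "cst (1 / of_nat d) * (of_nat d * x) = x"
    using d by (simp only: cst_of_nat[symmetric] cst_cst) simp
  ultimately show ?thesis by simp
qed

lemma tn4: "(gg p * gg q) * (cst t * Zg n c k * \<phi>) = cst t * (gg p * Zg n c k) * (gg q * \<phi>)"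
proof -
  have "(gg p * gg q) * (cst t * Zg n c k * \<phi>) = cst t * (gg p * (gg q * Zg n c k) * \<phi>)"
    by (simp only: mult.assoc cst_left)
  also have "\<dots> = cst t * (gg p * (Zg n c k * gg q) * \<phi>)"
    by (simp only: Zg_comm_gg')
  also have "\<dots> = cst t * (gg p * Zg n c k) * (gg q * \<phi>)"
    by (simp only: mult.assoc)
  finally show ?thesis .
qed

lemma C1:
  assumes lie: "simple_quadratic_lie n c" and inv: "invariant_poly n c F"
    and piv: "poly_in_vars n F" and hom: "homogeneous d F" and d: "0 < d"
  shows "inJ n c (Phi n c F)"
proof (rule inJ_of_nat_cancel[OF d])
  have "of_nat d * Phi n c F = (\<Sum>m<n. Zg n c m * Phi n c (pdiff m F))"
    by (rule Phi_Euler1[OF piv hom, symmetric])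
  also have "\<dots> = (\<Sum>p<n. \<Sum>q<n. (gg p * gg (n + q)) * (\<Sum>m<n. cst (c p q m) * Phi n c (pdiff m F)))"
    by (rule ZE)
  also have "\<dots> = (\<Sum>p<n. \<Sum>q<n. (gg p * gg (n + q)) *
       - (\<Sum>b<n. \<Sum>k<n. cst (c p k b) * Zg n c k * Phi n c (pdiff b (pdiff q F))))"
  proof (intro sum.cong refl arg_cong[where f="\<lambda>x. _ * x"])
    fix p q assume "p \<in> {..<n}" "q \<in> {..<n}"
    then show "(\<Sum>m<n. cst (c p q m) * Phi n c (pdiff m F))
        = - (\<Sum>b<n. \<Sum>k<n. cst (c p k b) * Zg n c k * Phi n c (pdiff b (pdiff q F)))"
      using Phi_D1[OF inv, of p q] by (simp add: eq_neg_iff_add_eq_0)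
  qed
  also have "\<dots> = - (\<Sum>p<n. \<Sum>q<n. \<Sum>b<n. \<Sum>k<n. cst (c p k b) * (gg p * Zg n c k) * (gg (n + q) * Phi n c (pdiff b (pdiff q F))))"
    by (simp only: mult_minus_right sum_negf sum_distrib_left tn4)
  also have "\<dots> = - (\<Sum>q<n. \<Sum>b<n. \<Sum>p<n. \<Sum>k<n. cst (c p k b) * (gg p * Zg n c k) * (gg (n + q) * Phi n c (pdiff b (pdiff q F))))"
    by (rule arg_cong[where f=uminus], rule swap3)
  also have "\<dots> = - (\<Sum>q<n. \<Sum>b<n. Wg n c b * (gg (n + q) * Phi n c (pdiff b (pdiff q F))))"
    by (simp only: Wg_def sum_distrib_right)
  finally have eq: "of_nat d * Phi n c F = \<dots>" .
  show "inJ n c (of_nat d * Phi n c F)"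
    unfolding eq
  proof (rule inJ_uminus, rule inJ_sum, rule inJ_sum, rule inJ_rmul)
    fix q b assume "q \<in> {..<n}" "b \<in> {..<n}"
    then show "inR n (gg (n + q) * Phi n c (pdiff b (pdiff q F)))" "inJ n c (Wg n c b)"
      by (auto intro!: inR_mult inR_gg inR_Phi inJ_Wg[OF lie])
  qed
qed


lemma tn5: "\<phi> * gg b = gg b * \<phi> \<Longrightarrow> (gg p * gg q) * (cst t * \<phi>) * gg b = - (cst t * (gg p * gg b) * (gg q * \<phi>))"
proof -
  assume h: "\<phi> * gg b = gg b * \<phi>"
  have "(gg p * gg q) * (cst t * \<phi>) * gg b = cst t * (gg p * (gg q * (\<phi> * gg b)))"
    by (simp only: mult.assoc cst_left)
  also have "\<dots> = cst t * (gg p * ((gg q * gg b) * \<phi>))"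
    by (simp only: h mult.assoc)
  also have "\<dots> = - (cst t * (gg p * gg b) * (gg q * \<phi>))"
    by (simp only: gg_anti[of q b] mult.assoc mult_minus_left mult_minus_right)
  finally show ?thesis .
qed

lemma tn6: "\<phi> * gg b = gg b * \<phi> \<Longrightarrow> (gg p * gg q) * (cst t * Zg n c k * \<phi>) * gg b = cst t * (gg p * Zg n c k) * (gg q * gg b * \<phi>)"
proof -
  assume h: "\<phi> * gg b = gg b * \<phi>"
  have "(gg p * gg q) * (cst t * Zg n c k * \<phi>) * gg b = cst t * (gg p * Zg n c k) * (gg q * \<phi>) * gg b"
    by (simp only: tn4)
  also have "\<dots> = cst t * (gg p * Zg n c k) * (gg q * (\<phi> * gg b))"
    by (simp only: mult.assoc)
  also have "\<dots> = cst t * (gg p * Zg n c k) * (gg q * gg b * \<phi>)"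
    by (simp only: h mult.assoc)
  finally show ?thesis .
qed

lemma swap4a: "(\<Sum>b\<in>A. \<Sum>p\<in>A. \<Sum>q\<in>A. \<Sum>j\<in>A. f b p q j) = (\<Sum>q\<in>A. \<Sum>j\<in>A. \<Sum>p\<in>A. \<Sum>b\<in>A. f b p q j)"
proof -
  have "(\<Sum>b\<in>A. \<Sum>p\<in>A. \<Sum>q\<in>A. \<Sum>j\<in>A. f b p q j) = (\<Sum>p\<in>A. \<Sum>b\<in>A. \<Sum>q\<in>A. \<Sum>j\<in>A. f b p q j)"
    by (rule sum.swap)
  also have "\<dots> = (\<Sum>p\<in>A. \<Sum>q\<in>A. \<Sum>j\<in>A. \<Sum>b\<in>A. f b p q j)"
    by (rule sum.cong[OF refl]) (rule swap3)
  also have "\<dots> = (\<Sum>q\<in>A. \<Sum>j\<in>A. \<Sum>p\<in>A. \<Sum>b\<in>A. f b p q j)"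
    by (rule swap3)
  finally show ?thesis .
qed

lemma C2:
  assumes lie: "simple_quadratic_lie n c" and inv: "invariant_poly n c F"
    and piv: "poly_in_vars n F" and hom: "homogeneous d F" and d: "2 \<le> d"
  shows "inJ n c (\<Sum>b<n. Phi n c (pdiff b F) * gg b)"
proof (rule inJ_of_nat_cancel[of "d - 1"])
  show "0 < d - 1" using d by simp
  have e2: "(\<Sum>m<n. Zg n c m * Phi n c (pdiff b (pdiff m F))) = of_nat (d - 1) * Phi n c (pdiff b F)"
    if b: "b < n" for b
  proof -
    have dd: "d = Suc (d - 1)" using d by simp
    have "of_nat d = (of_nat (d - 1) + 1 :: gr)" using dd by (metis add.commute of_nat_Suc)
    then show ?thesis using Phi_Euler2[OF piv hom b, of c] by (simp add: algebra_simps)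
  qed
  let ?A = "\<lambda>p q b. \<Sum>j<n. cst (c p b j) * Phi n c (pdiff j (pdiff q F))"
  let ?B = "\<lambda>p q b. \<Sum>j<n. \<Sum>k<n. cst (c p k j) * Zg n c k * Phi n c (pdiff j (pdiff b (pdiff q F)))"
  have "of_nat (d - 1) * (\<Sum>b<n. Phi n c (pdiff b F) * gg b)
      = (\<Sum>b<n. (of_nat (d - 1) * Phi n c (pdiff b F)) * gg b)"
    by (simp only: sum_distrib_left mult.assoc)
  also have "\<dots> = (\<Sum>b<n. (\<Sum>m<n. Zg n c m * Phi n c (pdiff b (pdiff m F))) * gg b)"
    by (rule sum.cong[OF refl]) (simp only: e2 lessThan_iff)
  also have "\<dots> = (\<Sum>b<n. (\<Sum>p<n. \<Sum>q<n. (gg p * gg (n + q)) * (\<Sum>m<n. cst (c p q m) * Phi n c (pdiff b (pdiff m F)))) * gg b)"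
    by (simp only: ZE)
  also have "\<dots> = (\<Sum>b<n. (\<Sum>p<n. \<Sum>q<n. (gg p * gg (n + q)) * (- ?A p q b - ?B p q b)) * gg b)"
  proof (intro sum.cong refl arg_cong[where f="\<lambda>x. x * _"] arg_cong[where f="\<lambda>x. _ * x"])
    fix b p q assume "b \<in> {..<n}" "p \<in> {..<n}" "q \<in> {..<n}"
    then show "(\<Sum>m<n. cst (c p q m) * Phi n c (pdiff b (pdiff m F))) = - ?A p q b - ?B p q b"
      using Phi_D2[OF inv, of p q b] by (simp add: algebra_simps eq_neg_iff_add_eq_0)
  qed
  also have "\<dots> = - (\<Sum>b<n. \<Sum>p<n. \<Sum>q<n. (gg p * gg (n + q)) * ?A p q b * gg b)
                   - (\<Sum>b<n. \<Sum>p<n. \<Sum>q<n. (gg p * gg (n + q)) * ?B p q b * gg b)"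
    by (simp only: sum_distrib_right right_diff_distrib left_diff_distrib mult_minus_right mult_minus_left
          sum_subtractf sum_negf)
  also have "(\<Sum>b<n. \<Sum>p<n. \<Sum>q<n. (gg p * gg (n + q)) * ?A p q b * gg b)
      = - (\<Sum>q<n. \<Sum>j<n. QX n c j * (gg (n + q) * Phi n c (pdiff j (pdiff q F))))"
  proof -
    have "(\<Sum>b<n. \<Sum>p<n. \<Sum>q<n. (gg p * gg (n + q)) * ?A p q b * gg b)
      = (\<Sum>b<n. \<Sum>p<n. \<Sum>q<n. \<Sum>j<n. - (cst (c p b j) * (gg p * gg b) * (gg (n + q) * Phi n c (pdiff j (pdiff q F)))))"
      by (simp only: sum_distrib_left sum_distrib_right tn5[OF Phi_comm_gg])
    also have "\<dots> = - (\<Sum>q<n. \<Sum>j<n. \<Sum>p<n. \<Sum>b<n. cst (c p b j) * (gg p * gg b) * (gg (n + q) * Phi n c (pdiff j (pdiff q F))))"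
      by (simp only: sum_negf) (rule arg_cong[where f=uminus], rule swap4a)
    also have "\<dots> = - (\<Sum>q<n. \<Sum>j<n. QX n c j * (gg (n + q) * Phi n c (pdiff j (pdiff q F))))"
      by (simp only: QX_nested sum_distrib_right)
    finally show ?thesis .
  qed
  also have "(\<Sum>b<n. \<Sum>p<n. \<Sum>q<n. (gg p * gg (n + q)) * ?B p q b * gg b)
      = (\<Sum>b<n. \<Sum>q<n. \<Sum>j<n. Wg n c j * (gg (n + q) * gg b * Phi n c (pdiff j (pdiff b (pdiff q F)))))"
  proof -
    have "(\<Sum>b<n. \<Sum>p<n. \<Sum>q<n. (gg p * gg (n + q)) * ?B p q b * gg b)
      = (\<Sum>b<n. \<Sum>p<n. \<Sum>q<n. \<Sum>j<n. \<Sum>k<n. cst (c p k j) * (gg p * Zg n c k) * (gg (n + q) * gg b * Phi n c (pdiff j (pdiff b (pdiff q F)))))"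
      by (simp only: sum_distrib_left sum_distrib_right tn6[OF Phi_comm_gg])
    also have "\<dots> = (\<Sum>b<n. \<Sum>q<n. \<Sum>j<n. \<Sum>p<n. \<Sum>k<n. cst (c p k j) * (gg p * Zg n c k) * (gg (n + q) * gg b * Phi n c (pdiff j (pdiff b (pdiff q F)))))"
      by (rule sum.cong[OF refl]) (rule swap3)
    also have "\<dots> = (\<Sum>b<n. \<Sum>q<n. \<Sum>j<n. Wg n c j * (gg (n + q) * gg b * Phi n c (pdiff j (pdiff b (pdiff q F)))))"
      by (simp only: Wg_def sum_distrib_right)
    finally show ?thesis .
  qed
  finally have eq: "of_nat (d - 1) * (\<Sum>b<n. Phi n c (pdiff b F) * gg b) =
    - (- (\<Sum>q<n. \<Sum>j<n. QX n c j * (gg (n + q) * Phi n c (pdiff j (pdiff q F)))))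
    - (\<Sum>b<n. \<Sum>q<n. \<Sum>j<n. Wg n c j * (gg (n + q) * gg b * Phi n c (pdiff j (pdiff b (pdiff q F)))))" .
  have jA: "inJ n c (\<Sum>q<n. \<Sum>j<n. QX n c j * (gg (n + q) * Phi n c (pdiff j (pdiff q F))))"
  proof (rule inJ_sum, rule inJ_sum, rule inJ_rmul)
    fix q j assume "q \<in> {..<n}" "j \<in> {..<n}"
    then show "inR n (gg (n + q) * Phi n c (pdiff j (pdiff q F)))" "inJ n c (QX n c j)"
      by (auto intro!: inR_mult inR_gg inR_Phi inJ_QX)
  qed
  have jB: "inJ n c (\<Sum>b<n. \<Sum>q<n. \<Sum>j<n. Wg n c j * (gg (n + q) * gg b * Phi n c (pdiff j (pdiff b (pdiff q F)))))"
  proof (rule inJ_sum, rule inJ_sum, rule inJ_sum, rule inJ_rmul)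
    fix b q j assume "b \<in> {..<n}" "q \<in> {..<n}" "j \<in> {..<n}"
    then show "inR n (gg (n + q) * gg b * Phi n c (pdiff j (pdiff b (pdiff q F))))" "inJ n c (Wg n c j)"
      by (auto intro!: inR_mult inR_gg inR_Phi inJ_Wg[OF lie])
  qed
  show "inJ n c (of_nat (d - 1) * (\<Sum>b<n. Phi n c (pdiff b F) * gg b))"
    unfolding eq by (intro inJ_diff inJ_uminus jA jB)
qed


lemma deg1_key:
  assumes s: "(\<Sum>i\<in>ks \<alpha>. lk \<alpha> i) = (1::nat)" and b: "lk \<alpha> b \<noteq> 0"
  shows "\<alpha> = Poly_Mapping.single b 1"
proof (rule poly_mapping_eqI)
  fix k
  have bk: "b \<in> ks \<alpha>" using b by (simp add: in_keys_iff)
  have le: "(\<Sum>i\<in>A. lk \<alpha> i) \<le> 1" if "A \<subseteq> ks \<alpha>" for A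
    using sum_mono2[OF finite_keys that, of "lk \<alpha>"] s by simp
  have b1: "lk \<alpha> b = 1" using le[of "{b}"] bk b by simp
  show "lk \<alpha> k = lk (Poly_Mapping.single b 1) k"
  proof (cases "k = b")
    case True then show ?thesis using b1 by simp
  next
    case False
    show ?thesis
    proof (cases "k \<in> ks \<alpha>")
      case True
      have "lk \<alpha> k + lk \<alpha> b \<le> 1" using le[of "{k, b}"] True bk False by simp
      then have "lk \<alpha> k = 0" using b1 by simp
      then show ?thesis using False by (simp add: lookup_single)
    next
      case nk: False
      then show ?thesis using False by (simp add: lookup_single in_keys_iff when_def)
    qed
  qed
qed

lemma deg1_pdiff:
  assumes hom: "homogeneous 1 F"
  shows "pdiff b F = pconst (lk F (Poly_Mapping.single b 1))"
proof -
  let ?e = "Poly_Mapping.single b (1::nat)"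
  have "pdiff b F = (\<Sum>\<alpha>\<in>ks F. pmono (\<alpha> - ee b) (of_nat (lk \<alpha> b) * lk F \<alpha>))"
    by (simp add: pdiff_def)
  also have "\<dots> = (\<Sum>\<alpha>\<in>ks F. if \<alpha> = ?e then pmono 0 (lk F \<alpha>) else 0)"
  proof (rule sum.cong[OF refl])
    fix \<alpha> assume a: "\<alpha> \<in> ks F"
    show "pmono (\<alpha> - ee b) (of_nat (lk \<alpha> b) * lk F \<alpha>) = (if \<alpha> = ?e then pmono 0 (lk F \<alpha>) else 0)"
    proof (cases "lk \<alpha> b = 0")
      case True
      then have "\<alpha> \<noteq> ?e" by auto
      then show ?thesis using True by simp
    next
      case False
      have "\<alpha> = ?e" using deg1_key[OF _ False] hom a by (simp add: homogeneous_def)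
      then show ?thesis by simp
    qed
  qed
  also have "\<dots> = pconst (lk F ?e)"
    by (simp add: sum.delta pconst_mono in_keys_iff)
  finally show ?thesis .
qed

lemma pconst_eq_0: "pconst t = 0 \<Longrightarrow> t = 0"
  by (metis lookup_single_eq lookup_zero pconst_mono)

lemma pconst_sum: "pconst (sum f A) = (\<Sum>i\<in>A. pconst (f i))"
  by (induction A rule: infinite_finite_induct) (simp_all add: pconst_add)

lemma deg1_center:
  assumes inv: "invariant_poly n c F" and hom: "homogeneous 1 F" and a: "a < n" and m: "m < n"
  shows "(\<Sum>b<n. c a m b * lk F (Poly_Mapping.single b 1)) = 0"
proof -
  have "pdiff m (Lop n c a F) = 0" by (simp add: invariant_Lop[OF inv a])
  then have "(\<Sum>b<n. pconst (c a m b) * pdiff b F) + Lop n c a (pdiff m F) = 0"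
    by (simp add: dLop[OF m])
  moreover have "Lop n c a (pdiff m F) = 0"
    by (simp add: Lop_def deg1_pdiff[OF hom])
  ultimately have "(\<Sum>b<n. pconst (c a m b) * pconst (lk F (Poly_Mapping.single b 1))) = 0"
    by (simp add: deg1_pdiff[OF hom])
  then have "pconst (\<Sum>b<n. c a m b * lk F (Poly_Mapping.single b 1)) = 0"
    by (simp add: pconst_sum pconst_mult_pconst)
  then show ?thesis by (rule pconst_eq_0)
qed

lemma deg1_zero:
  assumes lie: "simple_quadratic_lie n c" and inv: "invariant_poly n c F" and hom: "homogeneous 1 F"
  shows "F = 0"
proof -
  define f where "f b = lk F (Poly_Mapping.single b 1)" for b
  define v where "v i = (if i < n then f i else 0)" for i
  define V where "V = {w. \<exists>t. w = (\<lambda>i. t * v i)}"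
  have cen: "(\<Sum>b<n. v b * c a b k) = 0" if "a < n" "k < n" for a k
  proof -
    have "(\<Sum>b<n. v b * c a b k) = - (\<Sum>b<n. c a k b * f b)"
      unfolding sum_negf[symmetric]
      by (rule sum.cong[OF refl]) (simp add: v_def lie_as2[OF lie that(1) _ that(2)])
    also have "\<dots> = 0" using deg1_center[OF inv hom that] by (simp add: f_def)
    finally show ?thesis .
  qed
  have ideal: "lie_ideal n c V"
    unfolding lie_ideal_def
  proof (intro conjI ballI allI impI)
    show "V \<subseteq> lie_vecs n" by (auto simp: V_def lie_vecs_def v_def)
    show "(\<lambda>_. 0) \<in> V" unfolding V_def by (rule CollectI, rule exI[of _ 0]) simp
    fix w assume "w \<in> V"
    then obtain t where t: "w = (\<lambda>i. t * v i)" by (auto simp: V_def)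
    {
      fix w' assume "w' \<in> V"
      then obtain s where s: "w' = (\<lambda>i. s * v i)" by (auto simp: V_def)
      show "(\<lambda>i. w i + w' i) \<in> V" unfolding V_def t s
        by (rule CollectI, rule exI[of _ "t + s"]) (simp add: algebra_simps)
    }
    {
      fix r
      show "(\<lambda>i. r * w i) \<in> V" unfolding V_def t
        by (rule CollectI, rule exI[of _ "r * t"]) (simp add: algebra_simps)
    }
    {
      fix a assume a: "a < n"
      have "lie_ad n c a w = (\<lambda>i. 0 * v i)"
      proof
        fix k
        show "lie_ad n c a w k = 0 * v k"
        proof (cases "k < n")
          case True
          have "(\<Sum>b<n. t * v b * c a b k) = t * (\<Sum>b<n. v b * c a b k)"
            by (simp add: sum_distrib_left mult.assoc)
          then show ?thesis using True cen[OF a True] by (simp add: lie_ad_def t)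
        qed (simp add: lie_ad_def)
      qed
      then show "lie_ad n c a w \<in> V" unfolding V_def by blast
    }
  qed
  have vV: "v \<in> V" unfolding V_def by (rule CollectI, rule exI[of _ 1]) simp
  have simp_cases: "V = {\<lambda>_. 0} \<or> V = lie_vecs n"
    using conjunct2[OF conjunct2[OF conjunct2[OF conjunct2[OF lie[unfolded simple_quadratic_lie_def]]]]] ideal by blast
  have v0: "v = (\<lambda>_. 0)"
  proof (cases "V = {\<lambda>_. 0}")
    case True then show ?thesis using vV by auto
  next
    case False
    then have VL: "V = lie_vecs n" using simp_cases by blast
    obtain a0 b0 k0 where abk: "a0 < n" "b0 < n" "k0 < n" "c a0 b0 k0 \<noteq> 0"
      using conjunct1[OF conjunct2[OF conjunct2[OF conjunct2[OF lie[unfolded simple_quadratic_lie_def]]]]] by blast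
    have n2: "2 \<le> n"
    proof (rule ccontr)
      assume "\<not> 2 \<le> n"
      then have "a0 = 0" "b0 = 0" "k0 = 0" using abk by auto
      then have "c 0 0 0 = - c 0 0 0" using lie_as1[OF lie, of 0 0 0] abk by simp
      then have "c 0 0 0 = 0" by simp
      then show False using abk \<open>a0 = 0\<close> \<open>b0 = 0\<close> \<open>k0 = 0\<close> by simp
    qed
    define e0 where "e0 i = (if i = (0::nat) then (1::complex) else 0)" for i
    define e1 where "e1 i = (if i = (1::nat) then (1::complex) else 0)" for i
    have "e0 \<in> V" "e1 \<in> V" unfolding VL lie_vecs_def e0_def e1_def using n2 by auto
    then obtain t s where t: "e0 = (\<lambda>i. t * v i)" and s: "e1 = (\<lambda>i. s * v i)"
      unfolding V_def by blast
    have "t * v 0 = 1" "t * v 1 = 0" using fun_cong[OF t, of 0] fun_cong[OF t, of 1] by (simp_all add: e0_def)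
    moreover have "s * v 1 = 1" using fun_cong[OF s, of 1] by (simp add: e1_def)
    ultimately show ?thesis by (metis mult_eq_0_iff one_neq_zero)
  qed
  have f0: "pdiff m F = 0" if "m < n" for m
    using fun_cong[OF v0, of m] that by (simp add: deg1_pdiff[OF hom] v_def f_def)
  have piv: "poly_in_vars n F" using inv by (simp add: invariant_poly_def)
  have "(\<Sum>m<n. pvar m * pdiff m F) = of_nat 1 * F" by (rule euler[OF piv hom])
  then show "F = 0" by (simp add: f0)
qed


lemma C2':
  assumes lie: "simple_quadratic_lie n c" and inv: "invariant_poly n c F"
    and hom: "homogeneous d F" and d: "0 < d"
  shows "inJ n c (\<Sum>b<n. Phi n c (pdiff b F) * gg b)"
proof (cases "d = 1")
  case True
  then have "F = 0" using deg1_zero[OF lie inv] hom by simp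
  then show ?thesis by (simp add: inJ_sum)
next
  case False
  then have "2 \<le> d" using d by simp
  moreover have "poly_in_vars n F" using inv by (simp add: invariant_poly_def)
  ultimately show ?thesis using C2[OF lie inv _ hom] by blast
qed

lemma swap_fact: "(\<Sum>a<n. \<Sum>b<n. X b * Y a * Z b) = (\<Sum>b<n. X b * (\<Sum>a<n. Y a) * (Z b :: gr))"
  by (simp only: sum_distrib_left sum_distrib_right) (rule sum.swap)

lemma Phi_comm: "Phi n c P * Phi n c Q = Phi n c Q * Phi n c P"
  by (metis Phi_mult mult.commute)

lemma pdd_mult: "pdiff a (pdiff b (F * H)) = pdiff a (pdiff b F) * H + pdiff b F * pdiff a H
    + (pdiff b H * pdiff a F + F * pdiff a (pdiff b H))"
  by (simp add: pdiff_mult pdiff_add algebra_simps)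

theorem proposition2p2:
  fixes n :: nat and c :: "nat \<Rightarrow> nat \<Rightarrow> nat \<Rightarrow> complex" and F H :: cpoly and d e :: nat
  assumes "simple_quadratic_lie n c"
    and "invariant_poly n c F" and "homogeneous d F" and "0 < d"
    and "invariant_poly n c H" and "homogeneous e H" and "0 < e"
  shows "Fhat n c (F * H) \<in> Jideal n c"
proof -
  note lie = assms(1)
  have pF: "poly_in_vars n F" "poly_in_vars n H" using assms(2,5) by (simp_all add: invariant_poly_def)
  have JF: "inJ n c (Phi n c F)" by (rule C1[OF lie assms(2) pF(1) assms(3,4)])
  have JH: "inJ n c (Phi n c H)" by (rule C1[OF lie assms(5) pF(2) assms(6,7)])
  have TF: "inJ n c (\<Sum>b<n. Phi n c (pdiff b F) * gg b)" by (rule C2'[OF lie assms(2,3,4)])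
  have TH: "inJ n c (\<Sum>b<n. Phi n c (pdiff b H) * gg b)" by (rule C2'[OF lie assms(5,6,7)])
  let ?P = "\<lambda>P. Phi n c P"
  have "FhatG n c (F * H) =
      (\<Sum>a<n. \<Sum>b<n. ?P H * (?P (pdiff a (pdiff b F)) * gg a * gg (n + b)))
    + (\<Sum>a<n. \<Sum>b<n. ?P (pdiff b F) * (?P (pdiff a H) * gg a) * gg (n + b))
    + ((\<Sum>a<n. \<Sum>b<n. ?P (pdiff b H) * (?P (pdiff a F) * gg a) * gg (n + b))
    + (\<Sum>a<n. \<Sum>b<n. ?P F * (?P (pdiff a (pdiff b H)) * gg a * gg (n + b))))"
    unfolding FhatG_def pdd_mult Phi_add Phi_mult
    by (simp only: distrib_right sum.distrib Phi_comm[of n c "pdiff a (pdiff b F)" H for a b] mult.assoc)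
  also have "\<dots> =
      (\<Sum>a<n. \<Sum>b<n. ?P H * (?P (pdiff a (pdiff b F)) * gg a * gg (n + b)))
    + (\<Sum>b<n. ?P (pdiff b F) * (\<Sum>a<n. ?P (pdiff a H) * gg a) * gg (n + b))
    + ((\<Sum>b<n. ?P (pdiff b H) * (\<Sum>a<n. ?P (pdiff a F) * gg a) * gg (n + b))
    + (\<Sum>a<n. \<Sum>b<n. ?P F * (?P (pdiff a (pdiff b H)) * gg a * gg (n + b))))"
    by (simp only: swap_fact)
  finally have eq: "FhatG n c (F * H) = \<dots>" .
  have "inJ n c (FhatG n c (F * H))"
    unfolding eq
  proof (intro inJ_add)
    show "inJ n c (\<Sum>a<n. \<Sum>b<n. ?P H * (?P (pdiff a (pdiff b F)) * gg a * gg (n + b)))"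
      by (intro inJ_sum inJ_rmul JH inR_mult inR_Phi inR_gg) auto
    show "inJ n c (\<Sum>a<n. \<Sum>b<n. ?P F * (?P (pdiff a (pdiff b H)) * gg a * gg (n + b)))"
      by (intro inJ_sum inJ_rmul JF inR_mult inR_Phi inR_gg) auto
    show "inJ n c (\<Sum>b<n. ?P (pdiff b F) * (\<Sum>a<n. ?P (pdiff a H) * gg a) * gg (n + b))"
      by (intro inJ_sum inJ_rmul inJ_lmul TH inR_Phi inR_gg) auto
    show "inJ n c (\<Sum>b<n. ?P (pdiff b H) * (\<Sum>a<n. ?P (pdiff a F) * gg a) * gg (n + b))"
      by (intro inJ_sum inJ_rmul inJ_lmul TF inR_Phi inR_gg) auto
  qed
  then show ?thesis by (simp add: inJ_def Fhat_rg)
qed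


end
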